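(* Let $f:V_n^{(p)}\to\mathbb{F}_p$ be an $s$-plateaued function with dual $f^*$. If $f(0)=0$ and $f(x)=f(-x)$ for all $x\in V_n^{(p)}$, then $f^*(0)=0$.
   Context: Let $p$ be an odd prime, $V_n^{(p)}$ an $n$-dimensional $\mathbb{F}_p$-vector space with a non-degenerate symmetric bilinear form $\langle\cdot,\cdot\rangle_n$, $\xi_p=e^{2\pi\sqrt{-1}/p}$. For $f:V_n^{(p)}\to\mathbb{F}_p$, $\widehat{\chi_f}(\alpha)=\sum_x\xi_p^{f(x)-\langle\alpha,x\rangle_n}$; $f$ is $s$-plateaued ($0\le s\le n$) if $|\widehat{\chi_f}(\alpha)|\in\{0,p^{(n+s)/2}\}$ for all $\alpha$, with $\mathrm{Supp}(\widehat{\chi_f})$ the set where $p^{(n+s)/2}$ is attained. Let $\mu=1$ if $p^{n+s}\equiv1\pmod4$, else $\mu=\sqrt{-1}$. For $\alpha\in\mathrm{Supp}(\widehat{\chi_f})$, $\widehat{\chi_f}(\alpha)=\epsilon_\alpha\mu p^{(n+s)/2}\xi_p^{f^*(\alpha)}$ with unique $\epsilon_\alpha\in\{\pm1\}$ and $f^*(\alpha)\in\mathbb{F}_p$; $f^*:\mathrm{Supp}(\widehat{\chi_f})\to\mathbb{F}_p$ is the dual of $f$. *)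

theory Defs
  imports Complex_Main "HOL-Computational_Algebra.Primes"
begin

text \<open>The model: F_p is represented by the integers {0..<p} (arithmetic mod p);
  V_n^(p) is represented by the set of functions nat => int that take values in
  {0..<p} at indices < n and vanish elsewhere.\<close>

definition Vsp :: "int \<Rightarrow> nat \<Rightarrow> (nat \<Rightarrow> int) set" where
  "Vsp p n = {x. (\<forall>i<n. 0 \<le> x i \<and> x i < p) \<and> (\<forall>i\<ge>n. x i = 0)}"

definition vzero :: "nat \<Rightarrow> int" where
  "vzero = (\<lambda>i. 0)"

definition vneg :: "int \<Rightarrow> (nat \<Rightarrow> int) \<Rightarrow> (nat \<Rightarrow> int)" where
  "vneg p x = (\<lambda>i. (- x i) mod p)"

definition bform :: "int \<Rightarrow> nat \<Rightarrow> (nat \<Rightarrow> nat \<Rightarrow> int) \<Rightarrow> (nat \<Rightarrow> int) \<Rightarrow> (nat \<Rightarrow> int) \<Rightarrow> int" where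
  "bform p n M a x = (\<Sum>i<n. \<Sum>j<n. a i * M i j * x j) mod p"

definition symmetric_nondeg_form :: "int \<Rightarrow> nat \<Rightarrow> (nat \<Rightarrow> nat \<Rightarrow> int) \<Rightarrow> bool" where
  "symmetric_nondeg_form p n M \<longleftrightarrow>
     (\<forall>i<n. \<forall>j<n. M i j mod p = M j i mod p) \<and>
     (\<forall>a\<in>Vsp p n. (\<forall>x\<in>Vsp p n. bform p n M a x = 0) \<longrightarrow> a = vzero)"

definition xi :: "int \<Rightarrow> int \<Rightarrow> complex" where
  "xi p k = cis (2 * pi * of_int k / of_int p)"

definition walsh :: "int \<Rightarrow> nat \<Rightarrow> (nat \<Rightarrow> nat \<Rightarrow> int) \<Rightarrow> ((nat \<Rightarrow> int) \<Rightarrow> int) \<Rightarrow> (nat \<Rightarrow> int) \<Rightarrow> complex" where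
  "walsh p n M f \<alpha> = (\<Sum>x\<in>Vsp p n. xi p (f x - bform p n M \<alpha> x))"

definition plat_mag :: "int \<Rightarrow> nat \<Rightarrow> nat \<Rightarrow> real" where
  "plat_mag p n s = sqrt (of_int p) ^ (n + s)"

definition plateaued :: "int \<Rightarrow> nat \<Rightarrow> (nat \<Rightarrow> nat \<Rightarrow> int) \<Rightarrow> nat \<Rightarrow> ((nat \<Rightarrow> int) \<Rightarrow> int) \<Rightarrow> bool" where
  "plateaued p n M s f \<longleftrightarrow> s \<le> n \<and>
     (\<forall>\<alpha>\<in>Vsp p n. cmod (walsh p n M f \<alpha>) = 0 \<or> cmod (walsh p n M f \<alpha>) = plat_mag p n s)"

definition walsh_supp :: "int \<Rightarrow> nat \<Rightarrow> (nat \<Rightarrow> nat \<Rightarrow> int) \<Rightarrow> nat \<Rightarrow> ((nat \<Rightarrow> int) \<Rightarrow> int) \<Rightarrow> (nat \<Rightarrow> int) set" where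
  "walsh_supp p n M s f = {\<alpha>\<in>Vsp p n. cmod (walsh p n M f \<alpha>) = plat_mag p n s}"

definition mu :: "int \<Rightarrow> nat \<Rightarrow> nat \<Rightarrow> complex" where
  "mu p n s = (if p ^ (n + s) mod 4 = 1 then 1 else \<i>)"

definition dual :: "int \<Rightarrow> nat \<Rightarrow> (nat \<Rightarrow> nat \<Rightarrow> int) \<Rightarrow> nat \<Rightarrow> ((nat \<Rightarrow> int) \<Rightarrow> int) \<Rightarrow> (nat \<Rightarrow> int) \<Rightarrow> int" where
  "dual p n M s f \<alpha> = (THE c. 0 \<le> c \<and> c < p \<and>
     (\<exists>\<epsilon>::int. (\<epsilon> = 1 \<or> \<epsilon> = -1) \<and>
        walsh p n M f \<alpha> = of_int \<epsilon> * mu p n s * of_real (plat_mag p n s) * xi p c))"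

end

theory Submission
  imports Defs "Jordan_Normal_Form.Char_Poly"
begin


definition zeta :: "nat \<Rightarrow> complex" where "zeta q = cis (2 * pi / real q)"
definition ev :: "nat \<Rightarrow> nat \<Rightarrow> (nat \<Rightarrow> int) \<Rightarrow> complex" where
  "ev q j a = (\<Sum>t<q. of_int (a t) * zeta q ^ (j * t))"
definition inR :: "nat \<Rightarrow> complex \<Rightarrow> bool" where "inR q z \<longleftrightarrow> (\<exists>a. z = ev q 1 a)"
definition dvR :: "nat \<Rightarrow> complex \<Rightarrow> complex \<Rightarrow> bool" where
  "dvR q x z \<longleftrightarrow> (\<exists>w. inR q w \<and> z = x * w)"
definition conv :: "nat \<Rightarrow> (nat \<Rightarrow> int) \<Rightarrow> (nat \<Rightarrow> int) \<Rightarrow> nat \<Rightarrow> int" where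
  "conv q a b u = (\<Sum>t<q. a t * b ((u + q - t) mod q))"
definition negr :: "nat \<Rightarrow> (nat \<Rightarrow> int) \<Rightarrow> nat \<Rightarrow> int" where
  "negr q a t = a ((q - t) mod q)"

lemma modhelp1: "t < q \<Longrightarrow> i < (q::nat) \<Longrightarrow> ((t + i) mod q + q - i) mod q = t"
  by (cases "t + i < q") (auto simp: mod_if)
lemma modhelp2: "j < q \<Longrightarrow> i < (q::nat) \<Longrightarrow> ((j + q - i) mod q + i) mod q = j"
  by (cases "j < i") (auto simp: mod_if)

lemma zeta_pow_q: "q > 0 \<Longrightarrow> zeta q ^ q = 1"
  unfolding zeta_def DeMoivre by simp

lemma zeta_pow_mod: "q > 0 \<Longrightarrow> zeta q ^ k = zeta q ^ (k mod q)"
proof -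
  assume q: "q > 0"
  have "zeta q ^ k = zeta q ^ (q * (k div q) + k mod q)" by simp
  also have "\<dots> = zeta q ^ (k mod q)" by (simp only: power_add power_mult zeta_pow_q[OF q]) simp
  finally show ?thesis .
qed

lemma zeta_pow_eq_1: assumes q: "q > 0" shows "zeta q ^ k = 1 \<longleftrightarrow> q dvd k"
proof
  assume "zeta q ^ k = 1"
  hence "cis (real k * (2 * pi / real q)) = 1" unfolding zeta_def DeMoivre .
  hence "cos (real k * (2 * pi / real q)) = 1" by (metis cis.sel(1) one_complex.sel(1))
  then obtain x where x: "real k * (2 * pi / real q) = real_of_int x * 2 * pi"
    unfolding cos_one_2pi_int by blast
  hence "real k = real_of_int x * real q" using q by (simp add: field_simps)
  hence "int k = x * int q" by (metis of_int_eq_iff of_int_mult of_int_of_nat_eq)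
  thus "q dvd k" by (metis dvd_triv_right int_dvd_int_iff)
next
  assume "q dvd k" then obtain c where "k = q * c" by blast
  thus "zeta q ^ k = 1" by (simp add: power_mult zeta_pow_q q)
qed

lemma zeta_nz: "zeta q \<noteq> 0" by (simp add: zeta_def)
lemma cmod_zeta_pow: "cmod (zeta q ^ k) = 1" by (simp add: zeta_def norm_power)

lemma cnj_zeta: assumes q: "q > 0" shows "cnj (zeta q) = zeta q ^ (q - 1)"
proof -
  have "zeta q * cnj (zeta q) = 1"
    by (metis cmod_zeta_pow complex_norm_square mult_1 of_real_1 power_one power_one_right)
  moreover have "zeta q * zeta q ^ (q - 1) = 1"
    using q zeta_pow_q[OF q] by (metis Suc_diff_1 power_Suc)
  ultimately show ?thesis using zeta_nz by (metis mult_left_cancel)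
qed

lemma cnj_zeta_pow: "q > 0 \<Longrightarrow> cnj (zeta q ^ k) = zeta q ^ ((q - 1) * k)"
  by (simp add: cnj_zeta power_mult)

lemma gsum_zero: assumes q: "q > 0" and x: "x ^ q = (1::complex)" "x \<noteq> 1"
  shows "(\<Sum>j<q. x ^ j) = 0"
  using geometric_sum[OF x(2), of q] x(1) by simp

lemma zeta_sum: assumes q: "q > 0" and nd: "\<not> q dvd j"
  shows "(\<Sum>t<q. zeta q ^ (j * t)) = 0"
proof -
  have "(zeta q ^ j) ^ q = 1" by (simp add: power_mult[symmetric] mult.commute[of j] power_mult zeta_pow_q q)
  moreover have "zeta q ^ j \<noteq> 1" using zeta_pow_eq_1[OF q] nd by simp
  ultimately show ?thesis using gsum_zero[OF q] by (simp add: power_mult)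
qed

lemma ev_add: "ev q j (\<lambda>t. a t + b t) = ev q j a + ev q j b"
  by (simp add: ev_def sum.distrib algebra_simps)
lemma ev_diff: "ev q j (\<lambda>t. a t - b t) = ev q j a - ev q j b"
  by (simp add: ev_def sum_subtractf algebra_simps)
lemma ev_smult: "ev q j (\<lambda>t. c * a t) = of_int c * ev q j a"
  by (simp add: ev_def sum_distrib_left algebra_simps)
lemma ev_const: "ev q j (\<lambda>t. c) = of_int c * (\<Sum>t<q. zeta q ^ (j * t))"
  by (simp add: ev_def sum_distrib_left)
lemma ev_delta: assumes "k < q" shows "ev q j (\<lambda>t. if t = k then c else 0) = of_int c * zeta q ^ (j * k)"
proof -
  have "ev q j (\<lambda>t. if t = k then c else 0) = (\<Sum>t<q. if t = k then of_int c * zeta q ^ (j * k) else 0)"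
    unfolding ev_def by (rule sum.cong) auto
  thus ?thesis using assms by simp
qed
lemma ev_0: "ev q 0 a = of_int (\<Sum>t<q. a t)"
  by (simp add: ev_def)

lemma ev_conv: assumes q: "q > 0" shows "ev q j (conv q a b) = ev q j a * ev q j b"
proof -
  have "ev q j (conv q a b) = (\<Sum>u<q. \<Sum>t<q. of_int (a t) * (of_int (b ((u + q - t) mod q)) * zeta q ^ (j * u)))"
    unfolding ev_def conv_def of_int_sum of_int_mult sum_distrib_right by (simp add: mult.assoc)
  also have "\<dots> = (\<Sum>t<q. of_int (a t) * (\<Sum>u<q. of_int (b ((u + q - t) mod q)) * zeta q ^ (j * u)))"
    by (subst sum.swap) (simp add: sum_distrib_left)
  also have "\<dots> = (\<Sum>t<q. of_int (a t) * (zeta q ^ (j * t) * ev q j b))"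
  proof (rule sum.cong[OF refl])
    fix t assume t: "t \<in> {..<q}"
    have "(\<Sum>u<q. of_int (b ((u + q - t) mod q)) * zeta q ^ (j * u)) =
          (\<Sum>s<q. of_int (b s) * zeta q ^ (j * ((s + t) mod q)))"
    proof (rule sum.reindex_bij_witness[where i="\<lambda>s. (s + t) mod q" and j="\<lambda>u. (u + q - t) mod q"])
      fix s assume "s \<in> {..<q}" thus "((s + t) mod q + q - t) mod q = s" using t modhelp1 by auto
    next
      fix u assume "u \<in> {..<q}" thus "((u + q - t) mod q + t) mod q = u" using t modhelp2 by auto
    qed (use q t in \<open>auto simp: modhelp2\<close>)
    also have "\<dots> = (\<Sum>s<q. of_int (b s) * zeta q ^ (j * s) * zeta q ^ (j * t))"
    proof (rule sum.cong[OF refl])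
      fix s
      have "zeta q ^ (j * ((s + t) mod q)) = zeta q ^ ((j * (s + t)) mod q)"
        using zeta_pow_mod[OF q, of "j * ((s + t) mod q)"] by (simp add: mod_mult_right_eq)
      also have "\<dots> = zeta q ^ (j * (s + t))" using zeta_pow_mod[OF q] by simp
      finally show "of_int (b s) * zeta q ^ (j * ((s + t) mod q)) = of_int (b s) * zeta q ^ (j * s) * zeta q ^ (j * t)"
        by (simp add: distrib_left power_add)
    qed
    also have "\<dots> = zeta q ^ (j * t) * ev q j b"
      unfolding ev_def by (simp add: sum_distrib_left mult_ac)
    finally show "of_int (a t) * (\<Sum>u<q. of_int (b ((u + q - t) mod q)) * zeta q ^ (j * u)) =
        of_int (a t) * (zeta q ^ (j * t) * ev q j b)" by simp
  qed
  also have "\<dots> = ev q j a * ev q j b"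
    by (simp add: ev_def sum_distrib_right mult.assoc)
  finally show ?thesis .
qed

lemma negidx: "t < q \<Longrightarrow> (q - (q - t) mod q) mod (q::nat) = t"
  by (cases "t = 0") auto

lemma zeta_negexp: assumes q: "q > 0" and s: "s < q"
  shows "zeta q ^ (j * ((q - s) mod q)) = zeta q ^ ((q - 1) * (j * s))"
proof -
  have "int (j * ((q - s) mod q)) mod int q = int ((q - 1) * (j * s)) mod int q"
  proof -
    have "int ((q - s) mod q) mod int q = (- int s) mod int q"
      using s q by (cases "s = 0") (auto simp: zmod_int of_nat_diff mod_diff_left_eq[symmetric])
    hence "int (j * ((q - s) mod q)) mod int q = (int j * (- int s)) mod int q"
      by (metis mod_mult_right_eq of_nat_mult zmod_int)
    also have "\<dots> = (int q * (int j * int s) - int j * int s) mod int q" by (simp add: mod_diff_left_eq[symmetric])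
    also have "\<dots> = ((int q - 1) * (int j * int s)) mod int q" by (simp add: algebra_simps)
    also have "\<dots> = int ((q - 1) * (j * s)) mod int q" using q by (simp add: of_nat_diff)
    finally show ?thesis .
  qed
  hence "(j * ((q - s) mod q)) mod q = ((q - 1) * (j * s)) mod q"
    by (metis of_nat_eq_iff zmod_int)
  thus ?thesis using zeta_pow_mod[OF q] by metis
qed

lemma ev_negr: assumes q: "q > 0" shows "ev q j (negr q a) = cnj (ev q j a)"
proof -
  have "cnj (ev q j a) = (\<Sum>t<q. of_int (a t) * zeta q ^ ((q - 1) * (j * t)))"
    by (simp add: ev_def cnj_zeta[OF q] power_mult)
  also have "\<dots> = (\<Sum>s<q. of_int (a ((q - s) mod q)) * zeta q ^ (j * s))"
    by (rule sum.reindex_bij_witness[where i="\<lambda>s. (q - s) mod q" and j="\<lambda>t. (q - t) mod q"])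
       (use q in \<open>auto simp: zeta_negexp negidx\<close>)
  finally show ?thesis by (simp add: ev_def negr_def)
qed



lemma alg_int_rep:
  fixes w :: complex and q :: nat and a :: "nat \<Rightarrow> int"
  assumes q: "q > 0" and w: "w ^ q = 1"
  shows "algebraic_int (\<Sum>t<q. of_int (a t) * w ^ t)"
proof -
  define z where "z = (\<Sum>t<q. of_int (a t) * w ^ t)"
  define C where "C = mat q q (\<lambda>(i,j). a ((j + q - i) mod q))"
  define v where "v = vec q (\<lambda>j. w ^ j)"
  have wmod: "w ^ k = w ^ (k mod q)" for k
  proof -
    have "w ^ k = w ^ (q * (k div q) + k mod q)" by simp
    also have "\<dots> = w ^ (k mod q)" by (simp only: power_add power_mult w) simp
    finally show ?thesis .
  qed
  have Cc: "C \<in> carrier_mat q q" by (simp add: C_def)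
  have ev: "map_mat of_int C *\<^sub>v v = z \<cdot>\<^sub>v v"
  proof (rule eq_vecI)
    fix i assume i: "i < dim_vec (z \<cdot>\<^sub>v v)"
    hence iq: "i < q" by (simp add: v_def)
    have "(map_mat of_int C *\<^sub>v v) $ i = (\<Sum>j<q. of_int (a ((j + q - i) mod q)) * w ^ j)"
      using iq by (simp add: C_def v_def mult_mat_vec_def scalar_prod_def atLeast0LessThan)
    also have "\<dots> = (\<Sum>t<q. of_int (a t) * w ^ ((t + i) mod q))"
      by (rule sum.reindex_bij_witness[where i="\<lambda>t. (t + i) mod q" and j="\<lambda>j. (j + q - i) mod q"])
         (use iq in \<open>simp_all add: modhelp1 modhelp2\<close>)
    also have "\<dots> = (\<Sum>t<q. of_int (a t) * w ^ t) * w ^ i"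
      by (simp add: sum_distrib_right wmod[symmetric] power_add mult.assoc)
    finally show "(map_mat of_int C *\<^sub>v v) $ i = (z \<cdot>\<^sub>v v) $ i"
      using iq by (simp add: v_def z_def mult.commute)
  qed (simp add: C_def v_def)
  have v0: "v \<noteq> 0\<^sub>v q"
  proof
    assume "v = 0\<^sub>v q" hence "v $ 0 = 0" using q by simp
    thus False using q by (simp add: v_def)
  qed
  have "eigenvector (map_mat of_int C) v z"
    unfolding eigenvector_def using ev v0 Cc by (auto simp: v_def)
  hence "eigenvalue (map_mat of_int C) z" unfolding eigenvalue_def by blast
  moreover have Cc': "map_mat of_int C \<in> carrier_mat q q" using Cc by simp
  ultimately have "poly (char_poly (map_mat of_int C)) z = 0"
    using eigenvalue_root_char_poly[OF Cc'] by blast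
  moreover have ch: "char_poly (map_mat (of_int::int\<Rightarrow>complex) C) = map_poly of_int (char_poly C)"
    by (rule of_int_hom.char_poly_hom[OF Cc])
  ultimately have "poly (map_poly of_int (char_poly C)) z = 0"
    by simp
  moreover have "lead_coeff (char_poly C) = 1"
    using degree_monic_char_poly[OF Cc] by simp
  ultimately have "\<exists>P. poly (map_poly of_int P) z = 0 \<and> lead_coeff P = 1" by blast
  thus ?thesis unfolding algebraic_int_altdef_ipoly z_def .
qed

lemma inR_alg_int: assumes q: "q > 0" and z: "inR q z" shows "algebraic_int z"
proof -
  obtain a where "z = ev q 1 a" using z inR_def by blast
  thus ?thesis using alg_int_rep[OF q zeta_pow_q[OF q], of a] by (simp add: ev_def)
qed

lemma inR_frac: assumes q: "q > 0" and b: "b \<noteq> 0" and z: "inR q (of_int a / of_int b)"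
  shows "b dvd a"
proof -
  have "of_int a / of_int b \<in> (\<rat> :: complex set)" by simp
  hence "(of_int a / of_int b :: complex) \<in> \<int>" using rational_algebraic_int_is_int inR_alg_int[OF q z] by blast
  then obtain k where k: "(of_int a / of_int b :: complex) = of_int k" by (metis Ints_cases)
  hence "(of_int a :: complex) = of_int (k * b)" using b by (simp add: field_simps)
  hence "a = k * b" by (metis of_int_eq_iff)
  thus ?thesis by simp
qed

lemma inR_ev: "inR q (ev q 1 a)" unfolding inR_def by blast

lemma inR_int: assumes "q > 0" shows "inR q (of_int k)"
proof -
  have "ev q 1 (\<lambda>t. if t = 0 then k else 0) = of_int k" using ev_delta[of 0 q 1 k] assms by simp
  thus ?thesis unfolding inR_def by metis
qed

lemma inR_0: "q > 0 \<Longrightarrow> inR q 0" using inR_int[of q 0] by simp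
lemma inR_1: "q > 0 \<Longrightarrow> inR q 1" using inR_int[of q 1] by simp
lemma inR_nat: "q > 0 \<Longrightarrow> inR q (of_nat k)" using inR_int[of q "int k"] by simp

lemma inR_zeta_pow: assumes q: "q > 0" shows "inR q (zeta q ^ k)"
proof -
  have "ev q 1 (\<lambda>t. if t = k mod q then 1 else 0) = zeta q ^ (k mod q)" using ev_delta[of "k mod q" q 1 1] q by simp
  also have "\<dots> = zeta q ^ k" using zeta_pow_mod[OF q] by simp
  finally show ?thesis unfolding inR_def by metis
qed

lemma inR_add: assumes "inR q x" "inR q y" shows "inR q (x + y)"
proof -
  obtain a b where "x = ev q 1 a" "y = ev q 1 b" using assms inR_def by blast
  hence "x + y = ev q 1 (\<lambda>t. a t + b t)" by (simp add: ev_add)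
  thus ?thesis unfolding inR_def by blast
qed
lemma inR_diff: assumes "inR q x" "inR q y" shows "inR q (x - y)"
proof -
  obtain a b where "x = ev q 1 a" "y = ev q 1 b" using assms inR_def by blast
  hence "x - y = ev q 1 (\<lambda>t. a t - b t)" by (simp add: ev_diff)
  thus ?thesis unfolding inR_def by blast
qed
lemma inR_uminus: assumes "inR q x" shows "inR q (- x)"
proof -
  obtain a where "x = ev q 1 a" using assms inR_def by blast
  hence "- x = ev q 1 (\<lambda>t. (-1) * a t)" using ev_smult[of q 1 "-1" a] by simp
  thus ?thesis unfolding inR_def by blast
qed
lemma inR_mult: assumes "q > 0" "inR q x" "inR q y" shows "inR q (x * y)"
proof -
  obtain a b where "x = ev q 1 a" "y = ev q 1 b" using assms inR_def by blast
  hence "x * y = ev q 1 (conv q a b)" by (simp add: ev_conv assms(1))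
  thus ?thesis unfolding inR_def by blast
qed
lemma inR_cnj: assumes "q > 0" "inR q x" shows "inR q (cnj x)"
proof -
  obtain a where "x = ev q 1 a" using assms inR_def by blast
  hence "cnj x = ev q 1 (negr q a)" by (simp add: ev_negr assms(1))
  thus ?thesis unfolding inR_def by blast
qed
lemma inR_pow: assumes q: "q > 0" and x: "inR q x" shows "inR q (x ^ k)"
proof (induction k)
  case 0 show ?case using inR_1[OF q] by simp
next
  case (Suc k) thus ?case using inR_mult[OF q x Suc] by simp
qed
lemma inR_sum: assumes q: "q > 0" shows "(\<And>i. i \<in> A \<Longrightarrow> inR q (f i)) \<Longrightarrow> inR q (\<Sum>i\<in>A. f i)"
proof (induction A rule: infinite_finite_induct)
  case (insert a A)
  have "inR q (f a)" using insert.prems by simp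
  moreover have "inR q (sum f A)" using insert.IH insert.prems by simp
  ultimately show ?case using insert.hyps by (metis inR_add sum.insert)
qed (simp_all add: inR_0 q)

lemma dvR_refl: "q > 0 \<Longrightarrow> dvR q x x" unfolding dvR_def by (rule exI[of _ 1]) (simp add: inR_1)
lemma dvR_0: "q > 0 \<Longrightarrow> dvR q x 0" unfolding dvR_def by (rule exI[of _ 0]) (simp add: inR_0)
lemma dvR_add: assumes "dvR q x y" "dvR q x z" shows "dvR q x (y + z)"
proof -
  obtain u v where "inR q u" "y = x * u" "inR q v" "z = x * v" using assms unfolding dvR_def by blast
  moreover have "x * u + x * v = x * (u + v)" by (simp add: distrib_left)
  ultimately show ?thesis unfolding dvR_def using inR_add by metis
qed
lemma dvR_diff: assumes "dvR q x y" "dvR q x z" shows "dvR q x (y - z)"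
proof -
  obtain u v where "inR q u" "y = x * u" "inR q v" "z = x * v" using assms unfolding dvR_def by blast
  moreover have "x * u - x * v = x * (u - v)" by (simp add: right_diff_distrib)
  ultimately show ?thesis unfolding dvR_def using inR_diff by metis
qed
lemma dvR_uminus: assumes "dvR q x y" shows "dvR q x (- y)"
proof -
  obtain u where "inR q u" "y = x * u" using assms unfolding dvR_def by blast
  moreover have "- (x * u) = x * (- u)" by simp
  ultimately show ?thesis unfolding dvR_def using inR_uminus by metis
qed
lemma dvR_mult: assumes "q > 0" "dvR q x y" "inR q z" shows "dvR q x (y * z)"
proof -
  obtain u where "inR q u" "y = x * u" using assms unfolding dvR_def by blast
  moreover have "x * u * z = x * (u * z)" by simp
  ultimately show ?thesis unfolding dvR_def using inR_mult[OF assms(1) _ assms(3)] by metis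
qed
lemma dvR_mult2: assumes "q > 0" "dvR q x y" "dvR q x' y'" shows "dvR q (x * x') (y * y')"
proof -
  obtain w w' where "inR q w" "y = x * w" "inR q w'" "y' = x' * w'" using assms unfolding dvR_def by blast
  moreover have "x * w * (x' * w') = (x * x') * (w * w')" by (simp add: mult_ac)
  ultimately show ?thesis unfolding dvR_def using inR_mult[OF assms(1)] by metis
qed
lemma dvR_trans: assumes "q > 0" "dvR q x y" "dvR q y z" shows "dvR q x z"
proof -
  obtain u v where "inR q u" "y = x * u" "inR q v" "z = y * v" using assms unfolding dvR_def by blast
  moreover have "x * u * v = x * (u * v)" by simp
  ultimately show ?thesis unfolding dvR_def using inR_mult[OF assms(1)] by metis
qed
lemma dvR_multI: "inR q y \<Longrightarrow> dvR q x (x * y)"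
  unfolding dvR_def by blast
lemma dvR_inR: assumes "q > 0" "inR q x" "dvR q x y" shows "inR q y"
proof -
  obtain u where "inR q u" "y = x * u" using assms unfolding dvR_def by blast
  thus ?thesis using inR_mult[OF assms(1) assms(2)] by simp
qed
lemma dvR_sum: assumes q: "q > 0" shows "(\<And>i. i \<in> A \<Longrightarrow> dvR q x (f i)) \<Longrightarrow> dvR q x (\<Sum>i\<in>A. f i)"
proof (induction A rule: infinite_finite_induct)
  case (insert a A)
  have "dvR q x (f a)" using insert.prems by simp
  moreover have "dvR q x (sum f A)" using insert.IH insert.prems by simp
  ultimately have "dvR q x (f a + sum f A)" by (rule dvR_add)
  thus ?case using insert.hyps by simp
qed (simp_all add: dvR_0 q)
lemma dvR_pow: assumes q: "q > 0" and d: "dvR q x y" shows "dvR q (x ^ k) (y ^ k)"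
proof (induction k)
  case 0 show ?case using dvR_refl[OF q] by simp
next
  case (Suc k) show ?case using dvR_mult2[OF q d Suc] by simp
qed
lemma dvR_cancel: assumes "x \<noteq> 0" "dvR q (x * y) (x * z)" shows "dvR q y z"
proof -
  obtain u where "inR q u" "x * z = x * y * u" using assms unfolding dvR_def by blast
  moreover hence "z = y * u" using assms(1) by (simp add: mult.assoc)
  ultimately show ?thesis unfolding dvR_def by blast
qed
lemma dvR_cnj: assumes "q > 0" "dvR q x y" shows "dvR q (cnj x) (cnj y)"
proof -
  obtain u where "inR q u" "y = x * u" using assms unfolding dvR_def by blast
  thus ?thesis unfolding dvR_def using inR_cnj[OF assms(1)] by auto
qed



definition piq :: "nat \<Rightarrow> complex" where "piq q = 1 - zeta q"

lemma piq_nz: assumes "q > 1" shows "piq q \<noteq> 0"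
proof
  assume "piq q = 0" hence "zeta q ^ 1 = 1" by (simp add: piq_def)
  hence "q dvd 1" using zeta_pow_eq_1[of q 1] assms by simp
  thus False using assms by simp
qed

lemma dvR_zeta_pow_1: assumes q: "q > 0" shows "dvR q (piq q) (zeta q ^ t - 1)"
proof -
  have "zeta q ^ t - 1 = piq q * (- (\<Sum>i<t. zeta q ^ i))"
    by (simp add: piq_def power_diff_1_eq algebra_simps)
  moreover have "inR q (- (\<Sum>i<t. zeta q ^ i))"
    by (intro inR_uminus inR_sum[OF q] inR_zeta_pow[OF q])
  ultimately show ?thesis unfolding dvR_def by blast
qed

lemma dvR_ev_sum: assumes q: "q > 0" shows "dvR q (piq q) (ev q 1 a - of_int (\<Sum>t<q. a t))"
proof -
  have "ev q 1 a - of_int (\<Sum>t<q. a t) = (\<Sum>t<q. (zeta q ^ t - 1) * of_int (a t))"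
    by (simp add: ev_def sum_subtractf algebra_simps)
  also have "dvR q (piq q) \<dots>"
    by (intro dvR_sum[OF q] dvR_mult[OF q] dvR_zeta_pow_1[OF q] inR_int[OF q])
  finally show ?thesis .
qed

lemma binom_split:
  assumes q: "prime q" "odd q"
  shows "\<exists>T. dvR q (of_nat q * piq q ^ 2) T \<and> piq q ^ q = T - of_nat q * piq q"
proof -
  have q3: "q \<ge> 3" using q by (metis One_nat_def Suc_1 dvd_refl linorder_not_le nat_less_le prime_ge_2_nat not_less_eq_eq numeral_3_eq_3)
  hence q0: "q > 0" by simp
  define f where "f k = of_nat (q choose k) * (- piq q) ^ k" for k
  have "(- piq q + 1) ^ q = (\<Sum>k\<le>q. f k)"
    unfolding binomial_ring f_def by simp
  moreover have "- piq q + 1 = zeta q" by (simp add: piq_def)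
  ultimately have s1: "(\<Sum>k\<le>q. f k) = 1" using zeta_pow_q[OF q0] by simp
  have setq: "{..q} = insert 0 (insert 1 (insert q {2..<q}))" using q3 by auto
  have "(\<Sum>k\<le>q. f k) = f 0 + (f 1 + (f q + (\<Sum>k\<in>{2..<q}. f k)))"
    unfolding setq using q3 by (simp add: sum.insert)
  moreover have "f 0 = 1" by (simp add: f_def)
  moreover have "f 1 = - of_nat q * piq q" by (simp add: f_def)
  moreover have "f q = - (piq q ^ q)" using q(2) by (simp add: f_def power_minus_odd)
  ultimately have eq: "piq q ^ q = (\<Sum>k\<in>{2..<q}. f k) - of_nat q * piq q" using s1
    by (simp add: algebra_simps)
  have "dvR q (of_nat q * piq q ^ 2) (\<Sum>k\<in>{2..<q}. f k)"
  proof (rule dvR_sum[OF q0])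
    fix k assume k: "k \<in> {2..<q}"
    have "q dvd (q choose k)" using k q by (intro dvd_choose_prime) auto
    then obtain d where d: "q choose k = q * d" by blast
    have e1: "(- piq q) ^ k = (- 1) ^ k * (piq q ^ 2 * piq q ^ (k - 2))"
    proof -
      have "k = 2 + (k - 2)" using k by auto
      hence h: "piq q ^ 2 * piq q ^ (k - 2) = piq q ^ k" by (metis power_add)
      show ?thesis unfolding h by (rule power_minus)
    qed
    have "f k = of_nat q * of_nat d * ((- 1) ^ k * (piq q ^ 2 * piq q ^ (k - 2)))"
      unfolding f_def d e1 by simp
    also have "\<dots> = (of_nat q * piq q ^ 2) * (of_nat d * (- 1) ^ k * piq q ^ (k - 2))"
      by (simp only: mult_ac)
    finally have "f k = (of_nat q * piq q ^ 2) * (of_nat d * (- 1) ^ k * piq q ^ (k - 2))" .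
    moreover have "inR q (of_nat d * (- 1) ^ k * piq q ^ (k - 2))"
      by (intro inR_mult[OF q0] inR_nat[OF q0] inR_pow[OF q0] inR_uminus inR_1[OF q0])
         (simp add: piq_def inR_diff inR_1[OF q0] inR_zeta_pow[OF q0, of 1, simplified])
    ultimately show "dvR q (of_nat q * piq q ^ 2) (f k)" unfolding dvR_def by blast
  qed
  thus ?thesis using eq by blast
qed

lemma inR_piq: "q > 0 \<Longrightarrow> inR q (piq q)"
  unfolding piq_def using inR_diff[OF inR_1 inR_zeta_pow[of q 1]] by simp

lemma piq_pow_dvd_q: assumes q: "prime q" "odd q" shows "dvR q (of_nat q) (piq q ^ (q - 1))"
proof -
  have q1: "q > 1" using q prime_gt_1_nat by blast
  hence q0: "q > 0" by simp
  obtain T where T: "dvR q (of_nat q * piq q ^ 2) T" "piq q ^ q = T - of_nat q * piq q"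
    using binom_split[OF q] by blast
  have "dvR q (of_nat q * piq q) T"
    using dvR_trans[OF q0 _ T(1)] dvR_multI[of q "piq q" "of_nat q * piq q"] inR_piq[OF q0]
    by (simp add: power2_eq_square mult.assoc)
  moreover have "dvR q (of_nat q * piq q) (of_nat q * piq q)" by (rule dvR_refl[OF q0])
  ultimately have "dvR q (of_nat q * piq q) (piq q ^ q)" using T(2) dvR_diff by metis
  moreover have "piq q ^ q = piq q * piq q ^ (q - 1)" using q1 by (simp add: power_eq_if)
  ultimately have "dvR q (piq q * of_nat q) (piq q * piq q ^ (q - 1))" by (simp add: mult.commute)
  thus ?thesis using dvR_cancel piq_nz[OF q1] by blast
qed

lemma q_dvd_piq_pow: assumes q: "prime q" "odd q" shows "dvR q (piq q ^ (q - 1)) (of_nat q)"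
proof -
  have q1: "q > 1" using q prime_gt_1_nat by blast
  hence q0: "q > 0" by simp
  obtain T where T: "dvR q (of_nat q * piq q ^ 2) T" "piq q ^ q = T - of_nat q * piq q"
    using binom_split[OF q] by blast
  obtain Y where Y: "inR q Y" "T = of_nat q * piq q ^ 2 * Y" using T(1) dvR_def by blast
  have pq: "piq q ^ q = piq q * piq q ^ (q - 1)" using q1 by (simp add: power_eq_if)
  have "piq q * of_nat q = piq q * (of_nat q * piq q * Y - (piq q ^ (q - 1)))"
    using T(2) pq Y(2) by (simp add: algebra_simps power2_eq_square)
  hence base: "of_nat q = - (piq q ^ (q - 1)) + of_nat q * piq q * Y"
    using piq_nz[OF q1] by simp
  have "\<exists>A W. dvR q (piq q ^ (q - 1)) A \<and> inR q W \<and> of_nat q = A + of_nat q * piq q ^ k * W" for k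
  proof (induction k)
    case 0 show ?case
      by (rule exI[of _ 0], rule exI[of _ 1]) (simp add: dvR_0[OF q0] inR_1[OF q0])
  next
    case (Suc k)
    then obtain A W where AW: "dvR q (piq q ^ (q - 1)) A" "inR q W" "of_nat q = A + of_nat q * piq q ^ k * W" by blast
    have "of_nat q = A + piq q ^ k * W * (- (piq q ^ (q - 1)) + of_nat q * piq q * Y)"
      using AW(3) base by (metis mult.commute mult.left_commute)
    also have "\<dots> = (A + piq q ^ (q - 1) * (- (piq q ^ k * W))) + of_nat q * piq q ^ Suc k * (W * Y)"
      by (simp add: algebra_simps)
    finally have e: "of_nat q = (A + piq q ^ (q - 1) * (- (piq q ^ k * W))) + of_nat q * piq q ^ Suc k * (W * Y)" .
    have "dvR q (piq q ^ (q - 1)) (A + piq q ^ (q - 1) * (- (piq q ^ k * W)))"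
      by (intro dvR_add AW(1) dvR_multI inR_uminus inR_mult[OF q0] inR_pow[OF q0] inR_piq[OF q0] AW(2))
    moreover have "inR q (W * Y)" by (intro inR_mult[OF q0] AW(2) Y(1))
    ultimately show ?case using e by blast
  qed
  then obtain A W where AW: "dvR q (piq q ^ (q - 1)) A" "inR q W" "of_nat q = A + of_nat q * piq q ^ (q - 1) * W" by blast
  have "dvR q (piq q ^ (q - 1)) (piq q ^ (q - 1) * (of_nat q * W))"
    by (intro dvR_multI inR_mult[OF q0] inR_nat[OF q0] AW(2))
  hence "dvR q (piq q ^ (q - 1)) (A + piq q ^ (q - 1) * (of_nat q * W))" using AW(1) dvR_add by blast
  thus ?thesis using AW(3) by (simp add: mult_ac)
qed

lemma not_dvR_piq_1: assumes q: "prime q" "odd q" shows "\<not> dvR q (piq q) 1"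
proof
  assume "dvR q (piq q) 1"
  have q1: "q > 1" using q prime_gt_1_nat by blast
  hence q0: "q > 0" by simp
  have "dvR q (piq q ^ (q - 1)) (1 ^ (q - 1))" using dvR_pow[OF q0 \<open>dvR q (piq q) 1\<close>] .
  hence "dvR q (of_nat q) 1" using dvR_trans[OF q0 piq_pow_dvd_q[OF q]] by simp
  then obtain u where u: "inR q u" "1 = of_nat q * u" unfolding dvR_def by blast
  hence "u = of_int 1 / of_int (int q)" using q1 by (simp add: field_simps)
  hence "inR q (of_int 1 / of_int (int q))" using u(1) by simp
  moreover have "int q \<noteq> 0" using q1 by simp
  ultimately have "int q dvd 1" using inR_frac[OF q0] by blast
  thus False using q1 by simp
qed

lemma dvR_piq_int: assumes q: "prime q" "odd q" shows "dvR q (piq q) (of_int k) \<longleftrightarrow> int q dvd k"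
proof
  have q1: "q > 1" using q prime_gt_1_nat by blast
  hence q0: "q > 0" by simp
  have qpi: "dvR q (piq q) (of_nat q)"
  proof -
    have "q - 1 = Suc (q - 2)" using q1 by auto
    hence "piq q ^ (q - 1) = piq q * piq q ^ (q - 2)" by simp
    moreover have "dvR q (piq q) (piq q * piq q ^ (q - 2))"
      by (intro dvR_multI inR_pow[OF q0] inR_piq[OF q0])
    ultimately have "dvR q (piq q) (piq q ^ (q - 1))" by simp
    thus ?thesis using dvR_trans[OF q0 _ q_dvd_piq_pow[OF q]] by blast
  qed
  {
    assume "int q dvd k" then obtain c where "k = int q * c" by blast
    thus "dvR q (piq q) (of_int k)" using dvR_mult[OF q0 qpi inR_int[OF q0, of c]] by simp
  }
  {
    assume d: "dvR q (piq q) (of_int k)"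
    show "int q dvd k"
    proof (rule ccontr)
      assume nd: "\<not> int q dvd k"
      have "coprime (int q) k" using nd q(1) by (simp add: prime_imp_coprime_int)
      then obtain u v where "u * int q + v * k = 1" by (metis bezout_int coprime_iff_gcd_eq_1)
      hence "(1::complex) = of_int u * of_nat q + of_int v * of_int k"
        by (metis of_int_1 of_int_add of_int_mult of_int_of_nat_eq)
      moreover have "dvR q (piq q) (of_int u * of_nat q + of_int v * of_int k)"
        using dvR_add dvR_mult[OF q0 qpi inR_int[OF q0, of u]] dvR_mult[OF q0 d inR_int[OF q0, of v]]
        by (simp add: mult.commute)
      ultimately show False using not_dvR_piq_1[OF q] by simp
    qed
  }
qed



lemma dvR_piq_ev: assumes q: "prime q" "odd q"
  shows "dvR q (piq q) (ev q 1 a) \<longleftrightarrow> int q dvd (\<Sum>t<q. a t)"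
proof -
  have q0: "q > 0" using q prime_gt_0_nat by blast
  define S where "S = (\<Sum>t<q. a t)"
  have d: "dvR q (piq q) (ev q 1 a - of_int S)" unfolding S_def by (rule dvR_ev_sum[OF q0])
  show ?thesis unfolding S_def[symmetric]
  proof
    assume "dvR q (piq q) (ev q 1 a)"
    hence "dvR q (piq q) (ev q 1 a - (ev q 1 a - of_int S))" using d dvR_diff by blast
    hence "dvR q (piq q) (of_int S)" by simp
    thus "int q dvd S" using dvR_piq_int[OF q] by blast
  next
    assume "int q dvd S"
    hence "dvR q (piq q) (of_int S)" using dvR_piq_int[OF q] by blast
    hence "dvR q (piq q) ((ev q 1 a - of_int S) + of_int S)" using d dvR_add by blast
    thus "dvR q (piq q) (ev q 1 a)" by simp
  qed
qed

lemma piq_prime: assumes q: "prime q" "odd q" and x: "inR q x" and y: "inR q y"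
  and d: "dvR q (piq q) (x * y)"
  shows "dvR q (piq q) x \<or> dvR q (piq q) y"
proof -
  have q0: "q > 0" using q prime_gt_0_nat by blast
  obtain a b where ab: "x = ev q 1 a" "y = ev q 1 b" using x y inR_def by blast
  define A where "A = (\<Sum>t<q. a t)"
  define B where "B = (\<Sum>t<q. b t)"
  have dA: "dvR q (piq q) (x - of_int A)" using dvR_ev_sum[OF q0] ab A_def by simp
  have dB: "dvR q (piq q) (y - of_int B)" using dvR_ev_sum[OF q0] ab B_def by simp
  have "x * y - of_int (A * B) = (x - of_int A) * y + (y - of_int B) * of_int A"
    by (simp add: algebra_simps)
  moreover have "dvR q (piq q) ((x - of_int A) * y + (y - of_int B) * of_int A)"
    by (intro dvR_add dvR_mult[OF q0] dA dB y inR_int[OF q0])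
  ultimately have "dvR q (piq q) (x * y - (x * y - of_int (A * B)))" using d dvR_diff by metis
  hence "dvR q (piq q) (of_int (A * B))" by simp
  hence "int q dvd A * B" using dvR_piq_int[OF q] by blast
  hence "int q dvd A \<or> int q dvd B" using q(1) by (simp add: prime_dvd_mult_iff)
  thus ?thesis using dvR_piq_ev[OF q] ab A_def B_def by blast
qed

lemma cnj_piq: assumes q0: "q > 0" shows "cnj (piq q) = piq q * (- (zeta q ^ (q - 1)))"
proof -
  have "zeta q ^ (q - 1) * zeta q = 1" using zeta_pow_q[OF q0] q0
    by (metis Suc_diff_1 power_Suc2)
  thus ?thesis by (simp add: piq_def cnj_zeta[OF q0] algebra_simps)
qed

lemma dvR_piq_pow_cnj: assumes q0: "q > 0" and d: "dvR q (piq q ^ k) z"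
  shows "dvR q (piq q ^ k) (cnj z)"
proof -
  obtain w where w: "inR q w" "z = piq q ^ k * w" using d dvR_def by blast
  have cp: "cnj (piq q) ^ k = piq q ^ k * (- (zeta q ^ (q - 1))) ^ k"
    unfolding cnj_piq[OF q0] by (rule power_mult_distrib)
  have "cnj z = piq q ^ k * ((- (zeta q ^ (q - 1))) ^ k * cnj w)"
    using w(2) by (simp only: complex_cnj_mult complex_cnj_power cp mult.assoc)
  moreover have "inR q ((- (zeta q ^ (q - 1))) ^ k * cnj w)"
    by (intro inR_mult[OF q0] inR_pow[OF q0] inR_uminus inR_zeta_pow[OF q0] inR_cnj[OF q0] w(1))
  ultimately show ?thesis unfolding dvR_def by blast
qed

lemma val_lemma: assumes q: "prime q" "odd q" and z: "inR q z"
  shows "dvR q (piq q ^ (2 * k)) (z * cnj z) \<Longrightarrow> dvR q (piq q ^ k) z"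
proof (induction k)
  case 0 thus ?case using z by (simp add: dvR_def)
next
  case (Suc k)
  have q1: "q > 1" using q prime_gt_1_nat by blast
  hence q0: "q > 0" by simp
  have eq2: "piq q ^ (2 * Suc k) = piq q ^ (2 * k) * piq q ^ 2" by (simp add: power_add[symmetric])
  have "dvR q (piq q ^ (2 * k)) (piq q ^ (2 * Suc k))"
    unfolding eq2 by (intro dvR_multI inR_pow[OF q0] inR_piq[OF q0])
  hence "dvR q (piq q ^ (2 * k)) (z * cnj z)" using dvR_trans[OF q0 _ Suc.prems] by blast
  hence "dvR q (piq q ^ k) z" by (rule Suc.IH)
  then obtain z1 where z1: "inR q z1" "z = piq q ^ k * z1" using dvR_def by blast
  define u where "u = - (zeta q ^ (q - 1))"
  have cp: "cnj (piq q) ^ k = piq q ^ k * u ^ k"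
    unfolding cnj_piq[OF q0] u_def by (rule power_mult_distrib)
  have cz: "cnj z = piq q ^ k * (u ^ k * cnj z1)"
    using z1(2) by (simp only: complex_cnj_mult complex_cnj_power cp mult.assoc)
  have eqB: "piq q ^ (2 * k) = piq q ^ k * piq q ^ k" by (simp add: mult_2 power_add)
  have zc: "z * cnj z = piq q ^ (2 * k) * (u ^ k * (z1 * cnj z1))"
    unfolding eqB cz unfolding z1(2) by (simp only: mult_ac)
  have "dvR q (piq q ^ (2 * k) * piq q ^ 2) (piq q ^ (2 * k) * (u ^ k * (z1 * cnj z1)))"
    using Suc.prems by (simp only: eq2 zc)
  hence d1: "dvR q (piq q ^ 2) (u ^ k * (z1 * cnj z1))"
    using dvR_cancel piq_nz[OF q1] by (metis power_not_zero)
  have uu: "(- zeta q) ^ k * u ^ k = 1"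
  proof -
    have "(- zeta q) * u = 1" using zeta_pow_q[OF q0] q0 unfolding u_def
      by (metis Suc_diff_1 minus_mult_minus power_Suc)
    hence "((- zeta q) * u) ^ k = 1" by (simp only: power_one)
    thus ?thesis by (simp only: power_mult_distrib)
  qed
  have "dvR q (piq q ^ 2) ((u ^ k * (z1 * cnj z1)) * (- zeta q) ^ k)"
    by (intro dvR_mult[OF q0] d1 inR_pow[OF q0] inR_uminus inR_zeta_pow[OF q0, of 1, simplified])
  moreover have "(u ^ k * (z1 * cnj z1)) * (- zeta q) ^ k = z1 * cnj z1"
    using uu by (simp add: mult_ac)
  ultimately have "dvR q (piq q ^ 2) (z1 * cnj z1)" by simp
  moreover have "dvR q (piq q) (piq q ^ 2)"
    using dvR_multI[OF inR_piq[OF q0], of "piq q"] by (simp add: power2_eq_square)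
  ultimately have "dvR q (piq q) (z1 * cnj z1)" using dvR_trans[OF q0] by blast
  hence "dvR q (piq q) z1 \<or> dvR q (piq q) (cnj z1)"
    using piq_prime[OF q z1(1) inR_cnj[OF q0 z1(1)]] by blast
  hence "dvR q (piq q) z1"
    using dvR_piq_pow_cnj[OF q0, of 1 "cnj z1"] by auto
  then obtain z2 where z2: "inR q z2" "z1 = piq q * z2" using dvR_def by blast
  have "z = piq q ^ Suc k * z2" using z1(2) z2(2) by (simp add: mult_ac)
  thus ?case using z2(1) dvR_def by blast
qed



lemma dvR_piq_pow_mono: assumes q0: "q > 0" and ba: "b \<le> a" and d: "dvR q (piq q ^ a) x"
  shows "dvR q (piq q ^ b) x"
proof -
  have "piq q ^ a = piq q ^ b * piq q ^ (a - b)" using ba by (simp add: power_add[symmetric])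
  moreover have "dvR q (piq q ^ b) (piq q ^ b * piq q ^ (a - b))"
    by (intro dvR_multI inR_pow[OF q0] inR_piq[OF q0])
  ultimately show ?thesis using dvR_trans[OF q0 _ d] by simp
qed

lemma piq_basis: assumes q: "prime q" "odd q"
  shows "k \<le> q - 1 \<Longrightarrow> dvR q (piq q ^ k) (\<Sum>i<k. of_int (c i) * piq q ^ i) \<Longrightarrow> \<forall>i<k. int q dvd c i"
proof (induction k arbitrary: c)
  case 0 thus ?case by simp
next
  case (Suc k)
  have q1: "q > 1" using q prime_gt_1_nat by blast
  hence q0: "q > 0" by simp
  define Y where "Y = (\<Sum>i<k. of_int (c (Suc i)) * piq q ^ i)"
  have X: "(\<Sum>i<Suc k. of_int (c i) * piq q ^ i) = of_int (c 0) + piq q * Y"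
    unfolding Y_def sum.lessThan_Suc_shift by (simp add: sum_distrib_left mult_ac)
  have inY: "inR q Y" unfolding Y_def
    by (intro inR_sum[OF q0] inR_mult[OF q0] inR_int[OF q0] inR_pow[OF q0] inR_piq[OF q0])
  have d1: "dvR q (piq q) (of_int (c 0) + piq q * Y)"
    using dvR_piq_pow_mono[OF q0 _ Suc.prems(2), of 1] X by simp
  have "dvR q (piq q) (of_int (c 0) + piq q * Y - piq q * Y)"
    using dvR_diff[OF d1 dvR_multI[OF inY]] .
  hence "int q dvd c 0" using dvR_piq_int[OF q] by simp
  then obtain e where e: "c 0 = int q * e" by blast
  have "dvR q (piq q ^ (q - 1)) (of_int (c 0))"
    using dvR_mult[OF q0 q_dvd_piq_pow[OF q] inR_int[OF q0, of e]] e by simp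
  hence dc0: "dvR q (piq q ^ Suc k) (of_int (c 0))"
    using dvR_piq_pow_mono[OF q0 Suc.prems(1)] by blast
  have d2: "dvR q (piq q ^ Suc k) (of_int (c 0) + piq q * Y)" using Suc.prems(2) unfolding X .
  have "dvR q (piq q ^ Suc k) (of_int (c 0) + piq q * Y - of_int (c 0))"
    by (rule dvR_diff[OF d2 dc0])
  hence "dvR q (piq q * piq q ^ k) (piq q * Y)" by simp
  hence "dvR q (piq q ^ k) Y" using dvR_cancel piq_nz[OF q1] by blast
  hence "\<forall>i<k. int q dvd c (Suc i)" using Suc.IH[of "\<lambda>i. c (Suc i)"] Suc.prems(1) Y_def by simp
  thus ?case using \<open>int q dvd c 0\<close> by (auto simp: less_Suc_eq_0_disj)
qed

lemma int_pow_dvd_zero: assumes q: "(q::int) > 1" and d: "\<forall>N. q ^ N dvd x" shows "x = 0"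
proof (rule ccontr)
  assume x: "x \<noteq> 0"
  have "q ^ nat \<bar>x\<bar> dvd x" using d by blast
  hence "\<bar>q ^ nat \<bar>x\<bar>\<bar> \<le> \<bar>x\<bar>" using x dvd_imp_le_int by blast
  moreover have "int (nat \<bar>x\<bar>) < 2 ^ nat \<bar>x\<bar>" by (rule of_nat_less_two_power)
  moreover have "(2::int) ^ nat \<bar>x\<bar> \<le> q ^ nat \<bar>x\<bar>" using q by (intro power_mono) auto
  ultimately show False using q by simp
qed

lemma piq_LI: assumes q: "prime q" "odd q" and s: "(\<Sum>i<q - 1. of_int (c i) * piq q ^ i) = 0"
  shows "\<forall>i<q - 1. c i = 0"
proof -
  have q1: "q > 1" using q prime_gt_1_nat by blast
  hence q0: "q > 0" by simp
  have "\<forall>c. (\<Sum>i<q - 1. of_int (c i) * piq q ^ i) = 0 \<longrightarrow> (\<forall>i<q - 1. int q ^ N dvd c i)" for N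
  proof (induction N)
    case 0 thus ?case by simp
  next
    case (Suc N)
    show ?case
    proof (intro allI impI)
      fix c i assume c: "(\<Sum>i<q - 1. of_int (c i) * piq q ^ i) = (0::complex)" and i: "i < q - 1"
      have "\<forall>i<q - 1. int q dvd c i" using piq_basis[OF q, of "q - 1" c] c dvR_0[OF q0] by simp
      hence cc: "\<forall>i<q - 1. c i = int q * (c i div int q)" by simp
      have "of_nat q * (\<Sum>i<q - 1. of_int (c i div int q) * piq q ^ i) = (\<Sum>i<q - 1. of_int (c i) * piq q ^ i)"
        unfolding sum_distrib_left
      proof (rule sum.cong[OF refl])
        fix j assume "j \<in> {..<q - 1}"
        hence "c j = int q * (c j div int q)" using cc by simp
        hence "(of_int (c j) :: complex) = of_nat q * of_int (c j div int q)" by (metis of_int_mult of_int_of_nat_eq)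
        thus "of_nat q * (of_int (c j div int q) * piq q ^ j) = of_int (c j) * piq q ^ j" by simp
      qed
      hence "(\<Sum>i<q - 1. of_int (c i div int q) * piq q ^ i) = (0::complex)" using c q1 by simp
      hence "int q ^ N dvd c i div int q" using Suc.IH[rule_format, of "\<lambda>i. c i div int q"] i by simp
      hence "int q * int q ^ N dvd int q * (c i div int q)" by simp
      thus "int q ^ Suc N dvd c i" using cc i by simp
    qed
  qed
  hence "\<forall>i<q - 1. \<forall>N. int q ^ N dvd c i" using s by blast
  thus ?thesis using int_pow_dvd_zero[of "int q"] q1 by auto
qed



lemma poly_sum_lt: fixes p :: "complex poly"
  assumes "degree p < n" shows "poly p x = (\<Sum>i<n. coeff p i * x ^ i)"
proof -
  have "poly p x = (\<Sum>i\<le>degree p. coeff p i * x ^ i)" by (rule poly_altdef)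
  also have "\<dots> = (\<Sum>i<n. coeff p i * x ^ i)"
    by (rule sum.mono_neutral_left) (use assms in \<open>auto simp: coeff_eq_0\<close>)
  finally show ?thesis .
qed

lemma zeta_LI0: assumes q: "prime q" "odd q"
  and s: "(\<Sum>t<q - 1. of_int (b t) * zeta q ^ t) = 0"
  shows "\<forall>t<q - 1. b t = 0"
proof -
  have q1: "q > 1" using q prime_gt_1_nat by blast
  define B :: "int poly" where "B = (\<Sum>t<q - 1. monom (b t) t)"
  define r :: "int poly" where "r = [:1, -1:]"
  define C where "C = pcompose B r"
  have cB: "coeff B t = (if t < q - 1 then b t else 0)" for t
    unfolding B_def coeff_sum coeff_monom by (simp add: sum.delta' cong: if_cong)
  have dB: "degree B < q - 1"
  proof -
    have "degree B \<le> q - 2"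
      unfolding B_def by (rule degree_sum_le) (use q1 in \<open>auto intro: order.trans[OF degree_monom_le]\<close>)
    thus ?thesis using q1 by simp
  qed
  have dC: "degree C < q - 1"
    using degree_pcompose_le[of B r] dB unfolding C_def r_def by simp
  have pB: "poly (of_int_poly B) x = (\<Sum>t<q - 1. of_int (b t) * x ^ t)" for x :: complex
    using poly_sum_lt[of "of_int_poly B" "q - 1" x] dB cB by simp
  have "poly (of_int_poly C) (piq q) = poly (of_int_poly B) (poly (of_int_poly r) (piq q))"
    unfolding C_def of_int_hom.map_poly_pcompose poly_pcompose ..
  also have "poly (of_int_poly r) (piq q) = zeta q" by (simp add: r_def piq_def)
  finally have "poly (of_int_poly C) (piq q) = 0" using pB s by simp
  hence "(\<Sum>i<q - 1. of_int (coeff C i) * piq q ^ i) = 0"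
    using poly_sum_lt[of "of_int_poly C" "q - 1" "piq q"] dC by simp
  hence c0: "\<forall>i<q - 1. coeff C i = 0" using piq_LI[OF q] by blast
  have "C = 0"
  proof (rule poly_eqI)
    fix i show "coeff C i = coeff 0 i"
      using c0 dC coeff_eq_0[of C i] by (cases "i < q - 1") auto
  qed
  have rr: "pcompose r r = [:0, 1:]" by (simp add: r_def)
  have "B = pcompose B (pcompose r r)" unfolding rr by simp
  also have "\<dots> = pcompose C r" unfolding C_def by (simp add: pcompose_assoc)
  also have "\<dots> = 0" using \<open>C = 0\<close> by simp
  finally have "B = 0" .
  thus ?thesis using cB by (metis coeff_0)
qed

lemma zeta_LI: assumes q: "prime q" "odd q" and s: "ev q 1 a = 0"
  shows "\<forall>t<q. a t = a (q - 1)"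
proof -
  have q1: "q > 1" using q prime_gt_1_nat by blast
  hence q0: "q > 0" by simp
  define b where "b t = a t - a (q - 1)" for t
  have "(\<Sum>t<q. of_int (b t) * zeta q ^ t) = ev q 1 a - of_int (a (q - 1)) * (\<Sum>t<q. zeta q ^ (1 * t))"
    by (simp add: b_def ev_def sum_subtractf sum_distrib_left sum_distrib_right algebra_simps)
  also have "\<dots> = 0" using s zeta_sum[OF q0, of 1] q1 by simp
  finally have "(\<Sum>t<q. of_int (b t) * zeta q ^ t) = 0" .
  moreover have "{..<q} = insert (q - 1) {..<q - 1}" using q1 by auto
  ultimately have "(\<Sum>t<q - 1. of_int (b t) * zeta q ^ t) = 0" by (simp add: b_def)
  hence "\<forall>t<q - 1. b t = 0" using zeta_LI0[OF q] by blast
  thus ?thesis unfolding b_def by (metis eq_iff_diff_eq_0 less_SucE Suc_diff_1 q0)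
qed

lemma ev_cong: assumes q: "prime q" "odd q" and e: "ev q 1 a = ev q 1 b" and j: "\<not> q dvd j"
  shows "ev q j a = ev q j b"
proof -
  have q0: "q > 0" using q prime_gt_0_nat by blast
  have "ev q 1 (\<lambda>t. a t - b t) = 0" using e by (simp add: ev_diff)
  hence c: "\<forall>t<q. a t - b t = a (q - 1) - b (q - 1)" using zeta_LI[OF q] by blast
  have "ev q j (\<lambda>t. a t - b t) = ev q j (\<lambda>t. a (q - 1) - b (q - 1))"
    unfolding ev_def
  proof (rule sum.cong[OF refl])
    fix t assume "t \<in> {..<q}"
    hence e: "a t - b t = a (q - 1) - b (q - 1)" using c by blast
    show "of_int (a t - b t) * zeta q ^ (j * t) = of_int (a (q - 1) - b (q - 1)) * zeta q ^ (j * t)"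
      by (simp only: e)
  qed
  also have "\<dots> = 0" using ev_const zeta_sum[OF q0 j] by simp
  finally show ?thesis by (simp add: ev_diff)
qed



lemma zeta_pow_inj: assumes q0: "q > 0" and t: "t < q" and s: "s < q" and e: "zeta q ^ t = zeta q ^ s"
  shows "t = s"
proof (rule ccontr)
  assume ne: "t \<noteq> s"
  { fix x y assume xy: "x < y" "y < q" "zeta q ^ x = zeta q ^ y"
    have "y = x + (y - x)" using xy(1) by simp
    hence "zeta q ^ y = zeta q ^ x * zeta q ^ (y - x)" by (metis power_add)
    hence "zeta q ^ (y - x) = 1" using xy(3) zeta_nz by (metis mult_cancel_left1 power_not_zero)
    hence "q dvd (y - x)" using zeta_pow_eq_1[OF q0] by blast
    hence False using xy by (meson diff_less_mono2 diff_less dvd_imp_le zero_less_diff le_less_trans diff_le_self not_less) }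
  thus False using ne t s e by (metis linorder_neqE_nat)
qed

lemma orth: assumes q0: "q > 0" and t: "t < q" and s: "s < q"
  shows "(\<Sum>j<q. zeta q ^ (j * t) * cnj (zeta q ^ (j * s))) = (if t = s then of_nat q else 0)"
proof -
  define x where "x = zeta q ^ t * cnj (zeta q ^ s)"
  have cs: "zeta q ^ s * cnj (zeta q ^ s) = 1"
    by (metis cmod_zeta_pow complex_norm_square mult_1 of_real_1 power_one)
  have xj: "zeta q ^ (j * t) * cnj (zeta q ^ (j * s)) = x ^ j" for j
    by (simp add: x_def power_mult_distrib power_mult mult.commute[of j])
  have xq: "x ^ q = 1"
  proof -
    have "x ^ q = (zeta q ^ q) ^ t * cnj ((zeta q ^ q) ^ s)"
      by (simp add: x_def power_mult_distrib power_mult[symmetric] mult.commute)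
    thus ?thesis by (simp add: zeta_pow_q[OF q0])
  qed
  show ?thesis
  proof (cases "t = s")
    case True
    hence "x = 1" using cs by (simp add: x_def)
    thus ?thesis using True xj by simp
  next
    case False
    have "x \<noteq> 1"
    proof
      assume "x = 1"
      have "zeta q ^ t = zeta q ^ t * (zeta q ^ s * cnj (zeta q ^ s))" by (simp only: cs mult_1_right)
      also have "\<dots> = (zeta q ^ t * cnj (zeta q ^ s)) * zeta q ^ s" by (simp only: mult_ac)
      also have "\<dots> = zeta q ^ s" by (simp only: x_def[symmetric] \<open>x = 1\<close> mult_1_left)
      finally have "zeta q ^ t = zeta q ^ s" .
      thus False using zeta_pow_inj[OF q0 t s] False by blast
    qed
    thus ?thesis using gsum_zero[OF q0 xq] False xj by simp
  qed
qed

lemma parseval: assumes q0: "q > 0"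
  shows "(\<Sum>j<q. ev q j a * cnj (ev q j a)) = of_nat q * of_int (\<Sum>t<q. (a t)^2)"
proof -
  have "(\<Sum>j<q. ev q j a * cnj (ev q j a)) =
        (\<Sum>j<q. \<Sum>t<q. \<Sum>s<q. of_int (a t) * of_int (a s) * (zeta q ^ (j * t) * cnj (zeta q ^ (j * s))))"
    unfolding ev_def cnj_sum sum_product by (simp add: mult_ac)
  also have "\<dots> = (\<Sum>t<q. \<Sum>j<q. \<Sum>s<q. of_int (a t) * of_int (a s) * (zeta q ^ (j * t) * cnj (zeta q ^ (j * s))))"
    by (rule sum.swap)
  also have "\<dots> = (\<Sum>t<q. \<Sum>s<q. \<Sum>j<q. of_int (a t) * of_int (a s) * (zeta q ^ (j * t) * cnj (zeta q ^ (j * s))))"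
    by (rule sum.cong[OF refl], rule sum.swap)
  also have "\<dots> = (\<Sum>t<q. \<Sum>s<q. of_int (a t) * of_int (a s) * (\<Sum>j<q. zeta q ^ (j * t) * cnj (zeta q ^ (j * s))))"
    by (simp only: sum_distrib_left)
  also have "\<dots> = (\<Sum>t<q. \<Sum>s<q. of_int (a t) * of_int (a s) * (if t = s then of_nat q else 0))"
  proof (intro sum.cong refl)
    fix t s assume "t \<in> {..<q}" "s \<in> {..<q}"
    hence ts: "t < q" "s < q" by auto
    show "of_int (a t) * of_int (a s) * (\<Sum>j<q. zeta q ^ (j * t) * cnj (zeta q ^ (j * s))) =
          of_int (a t) * of_int (a s) * (if t = s then of_nat q else 0)"
      by (simp only: orth[OF q0 ts])
  qed
  also have "\<dots> = (\<Sum>t<q. of_int (a t) * of_int (a t) * of_nat q)"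
    by (simp add: if_distrib cong: if_cong)
  also have "\<dots> = of_nat q * of_int (\<Sum>t<q. (a t)^2)"
    by (simp add: sum_distrib_left power2_eq_square mult_ac)
  finally show ?thesis .
qed



lemma comb_lemma: fixes a :: "nat \<Rightarrow> int"
  assumes q2: "q \<ge> 2" and h: "int q * (\<Sum>t<q. (a t)^2) - (\<Sum>t<q. a t)^2 = int q - 1"
  shows "\<exists>c<q. \<exists>v d. d^2 = 1 \<and> (\<forall>t<q. t \<noteq> c \<longrightarrow> a t = v) \<and> a c = v + d"
proof -
  define S where "S = (\<Sum>t<q. a t)"
  define Q where "Q = (\<Sum>t<q. (a t)^2)"
  have P: "(\<Sum>t<q. \<Sum>u<q. (a t - a u)^2) = 2 * (int q - 1)"
  proof -
    have "(\<Sum>t<q. \<Sum>u<q. (a t - a u)^2) = (\<Sum>t<q. \<Sum>u<q. (a t)^2 + (a u)^2 - 2 * (a t * a u))"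
      by (intro sum.cong refl) (simp add: power2_diff algebra_simps)
    also have "\<dots> = (\<Sum>t<q. int q * (a t)^2 + Q - 2 * (a t * S))"
      by (simp add: sum.distrib sum_subtractf sum_distrib_left Q_def S_def)
    also have "\<dots> = int q * Q + int q * Q - 2 * (S * S)"
      by (simp add: sum.distrib sum_subtractf sum_distrib_left sum_distrib_right Q_def S_def mult.commute)
    also have "\<dots> = 2 * (int q - 1)" using h by (simp add: Q_def S_def power2_eq_square algebra_simps)
    finally show ?thesis .
  qed
  define D where "D t = card {u\<in>{..<q}. a u \<noteq> a t}" for t
  have PD: "int (D t) \<le> (\<Sum>u<q. (a t - a u)^2)" for t
  proof -
    have "int (D t) = (\<Sum>u<q. if a u \<noteq> a t then 1 else 0)"
      unfolding D_def by (simp add: sum.If_cases Collect_conj_eq lessThan_def)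
    also have "\<dots> \<le> (\<Sum>u<q. (a t - a u)^2)"
    proof (rule sum_mono)
      fix u
      show "(if a u \<noteq> a t then 1 else 0) \<le> (a t - a u)^2"
      proof (cases "a u = a t")
        case False
        hence "a t - a u \<noteq> 0" by simp
        hence "1 \<le> \<bar>a t - a u\<bar>" by linarith
        hence "1 * 1 \<le> \<bar>a t - a u\<bar> * \<bar>a t - a u\<bar>" by (intro mult_mono) auto
        thus ?thesis using False by (simp add: power2_eq_square)
      qed simp
    qed
    finally show ?thesis .
  qed
  have "\<exists>t0<q. D t0 \<le> 1"
  proof (rule ccontr)
    assume "\<not> ?thesis"
    hence "\<forall>t<q. 2 \<le> int (D t)" by auto
    hence "(\<Sum>t<q. 2) \<le> (\<Sum>t<q. int (D t))" by (intro sum_mono) auto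
    also have "\<dots> \<le> (\<Sum>t<q. \<Sum>u<q. (a t - a u)^2)" by (intro sum_mono PD)
    finally show False using P by simp
  qed
  then obtain t0 where t0: "t0 < q" "D t0 \<le> 1" by blast
  show ?thesis
  proof (cases "D t0 = 0")
    case True
    hence all: "\<forall>u<q. a u = a t0" unfolding D_def by auto
    have "S = int q * a t0" unfolding S_def using all by simp
    moreover have "Q = int q * (a t0)^2" unfolding Q_def using all by simp
    ultimately have "int q - 1 = 0" using h by (simp add: S_def Q_def power2_eq_square)
    thus ?thesis using q2 by simp
  next
    case False
    hence "D t0 = 1" using t0 by simp
    then obtain c where c: "{u\<in>{..<q}. a u \<noteq> a t0} = {c}" unfolding D_def by (meson card_1_singletonE)
    hence cq: "c < q" and ac: "a c \<noteq> a t0" by auto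
    have oth: "\<forall>t<q. t \<noteq> c \<longrightarrow> a t = a t0" using c by blast
    define v where "v = a t0"
    define d where "d = a c - v"
    define e where "e t = (if t = c then d else 0)" for t
    have ae: "\<forall>t<q. a t = v + e t" using oth unfolding e_def d_def v_def by auto
    have "S = (\<Sum>t<q. v + e t)" unfolding S_def using ae by (intro sum.cong) auto
    also have "\<dots> = int q * v + d" using cq by (simp add: sum.distrib e_def)
    finally have S': "S = int q * v + d" .
    have "Q = (\<Sum>t<q. v^2 + 2 * v * e t + (e t)^2)" unfolding Q_def using ae
      by (intro sum.cong) (auto simp: power2_eq_square algebra_simps)
    also have "\<dots> = int q * v^2 + 2 * v * (\<Sum>t<q. e t) + (\<Sum>t<q. (e t)^2)"
      by (simp add: sum.distrib sum_distrib_left)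
    also have "(\<Sum>t<q. e t) = d" using cq by (simp add: e_def)
    also have "(\<lambda>t. (e t)^2) = (\<lambda>t. if t = c then d^2 else 0)" by (auto simp: e_def)
    also have "(\<Sum>t<q. (if t = c then d^2 else 0)) = d^2" using cq by simp
    finally have Q': "Q = int q * v^2 + 2 * v * d + d^2" .
    have "(int q - 1) * d^2 = int q - 1"
      using h unfolding S_def[symmetric] Q_def[symmetric] S' Q' by (simp add: power2_eq_square algebra_simps)
    hence "d^2 = 1" using q2 by simp
    moreover have "a c = v + d" by (simp add: d_def)
    moreover have "\<forall>t<q. t \<noteq> c \<longrightarrow> a t = v" using oth v_def by simp
    ultimately show ?thesis using cq by blast
  qed
qed



lemma kronecker: assumes q: "prime q" "odd q" and dl: "inR q \<delta>" and u: "\<delta> * cnj \<delta> = 1"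
  shows "\<exists>c<q. \<exists>d::int. d^2 = 1 \<and> \<delta> = of_int d * zeta q ^ c"
proof -
  have q1: "q > 1" using q prime_gt_1_nat by blast
  hence q0: "q > 0" by simp
  have q2: "q \<ge> 2" using q1 by simp
  obtain a where a: "\<delta> = ev q 1 a" using dl inR_def by blast
  define e0 where "e0 = (\<lambda>t::nat. if t = 0 then (1::int) else 0)"
  have "ev q 1 (conv q a (negr q a)) = ev q 1 e0"
    using u a ev_conv[OF q0] ev_negr[OF q0] ev_delta[OF q0, of 1 1] by (simp add: e0_def)
  hence one: "ev q j a * cnj (ev q j a) = 1" if "0 < j" "j < q" for j
  proof -
    assume e: "ev q 1 (conv q a (negr q a)) = ev q 1 e0"
    have nd: "\<not> q dvd j" using that by (simp add: nat_dvd_not_less)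
    have "ev q j a * cnj (ev q j a) = ev q j (conv q a (negr q a))"
      by (simp add: ev_conv[OF q0] ev_negr[OF q0])
    also have "\<dots> = ev q j e0" using ev_cong[OF q e nd] .
    also have "\<dots> = 1" using ev_delta[OF q0, of j 1] by (simp add: e0_def)
    finally show ?thesis .
  qed
  define S where "S = (\<Sum>t<q. a t)"
  have "(\<Sum>j<q. ev q j a * cnj (ev q j a)) = ev q 0 a * cnj (ev q 0 a) + (\<Sum>j\<in>{1..<q}. ev q j a * cnj (ev q j a))"
  proof -
    have "{..<q} = insert 0 {1..<q}" using q1 by auto
    thus ?thesis by simp
  qed
  also have "(\<Sum>j\<in>{1..<q}. ev q j a * cnj (ev q j a)) = (\<Sum>j\<in>{1..<q}. 1)"
    by (intro sum.cong refl) (use one in auto)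
  also have "ev q 0 a * cnj (ev q 0 a) = of_int (S^2)" by (simp add: ev_0 S_def power2_eq_square)
  finally have "of_nat q * of_int (\<Sum>t<q. (a t)^2) = (of_int (S^2) + of_nat (q - 1) :: complex)"
    using parseval[OF q0, of a] by simp
  hence "(of_int (int q * (\<Sum>t<q. (a t)^2)) :: complex) = of_int (S^2 + int (q - 1))" by simp
  hence "int q * (\<Sum>t<q. (a t)^2) = S^2 + int (q - 1)" by (simp only: of_int_eq_iff)
  hence "int q * (\<Sum>t<q. (a t)^2) - (\<Sum>t<q. a t)^2 = int q - 1" using q1 by (simp add: S_def of_nat_diff)
  then obtain c v d where c: "c < q" "d^2 = 1" "\<forall>t<q. t \<noteq> c \<longrightarrow> a t = v" "a c = v + d"
    using comb_lemma[OF q2] by blast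
  have "ev q 1 a = ev q 1 (\<lambda>t. v + (if t = c then d else 0))"
    unfolding ev_def using c by (intro sum.cong refl) auto
  also have "\<dots> = of_int v * (\<Sum>t<q. zeta q ^ (1 * t)) + of_int d * zeta q ^ (1 * c)"
    by (simp only: ev_add ev_const ev_delta[OF c(1)])
  also have "\<dots> = of_int d * zeta q ^ c" using zeta_sum[OF q0, of 1] q1 by simp
  finally show ?thesis using a c by blast
qed

lemma c_zero: assumes q: "prime q" "odd q" and Q: "odd (Q::int)" and d: "d^2 = (1::int)" and c: "c < q"
  and h: "dvR q 2 (of_int Q * of_int d * zeta q ^ c - 1)"
  shows "c = 0"
proof (rule ccontr)
  assume c0: "c \<noteq> 0"
  have q1: "q > 1" using q prime_gt_1_nat by blast
  hence q0: "q > 0" by simp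
  have "odd (Q * d)" using Q d by (metis even_mult_iff even_power zero_neq_numeral odd_one power2_eq_square) 
  then obtain k where k: "Q * d = 2 * k + 1" by (metis oddE)
  have eqz: "zeta q ^ c - 1 = (of_int Q * of_int d * zeta q ^ c - 1) - 2 * (of_int k * zeta q ^ c)"
  proof -
    have "(of_int Q * of_int d :: complex) = 2 * of_int k + 1" using k by (metis of_int_add of_int_mult of_int_1 of_int_numeral)
    thus ?thesis by (simp add: algebra_simps)
  qed
  moreover have "dvR q 2 (2 * (of_int k * zeta q ^ c))"
    by (intro dvR_multI inR_mult[OF q0] inR_int[OF q0] inR_zeta_pow[OF q0])
  hence "dvR q 2 ((of_int Q * of_int d * zeta q ^ c - 1) - 2 * (of_int k * zeta q ^ c))" by (rule dvR_diff[OF h])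
  hence h1: "dvR q 2 (zeta q ^ c - 1)" unfolding eqz .
  have hk: "dvR q 2 (zeta q ^ (c * k) - 1)" for k
  proof (induction k)
    case 0 thus ?case using dvR_0[OF q0] by simp
  next
    case (Suc k)
    have "zeta q ^ (c * Suc k) - 1 = zeta q ^ c * (zeta q ^ (c * k) - 1) + (zeta q ^ c - 1)"
      by (simp add: algebra_simps power_add)
    moreover have "dvR q 2 (zeta q ^ c * (zeta q ^ (c * k) - 1))"
      using dvR_mult[OF q0 Suc inR_zeta_pow[OF q0, of c]] by (simp add: mult.commute)
    ultimately show ?case using dvR_add h1 by metis
  qed
  have "\<not> q dvd c" using c c0 by (simp add: nat_dvd_not_less)
  hence "coprime q c" using q(1) by (simp add: prime_imp_coprime)
  hence cop: "coprime c q" by (simp add: coprime_commute)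
  have ht: "dvR q 2 (zeta q ^ t - 1)" if "t < q" for t
  proof -
    obtain x y where xy: "c * x = q * y + gcd c q" using bezout_nat[of c q] c0 by blast
    hence "c * x = q * y + 1" using cop by simp
    hence "(c * (x * t)) mod q = t mod q" by (metis mod_mult_self3 mult.assoc mult.commute mult_1 add.commute distrib_left mod_mult_left_eq)
    hence "zeta q ^ (c * (x * t)) = zeta q ^ t" using zeta_pow_mod[OF q0] by metis
    thus ?thesis using hk[of "x * t"] by simp
  qed
  have "dvR q 2 (\<Sum>t<q. zeta q ^ t - 1)" by (intro dvR_sum[OF q0] ht) simp
  moreover have "(\<Sum>t<q. zeta q ^ t - 1) = - of_nat q"
    using zeta_sum[OF q0, of 1] q1 by (simp add: sum_subtractf)
  ultimately obtain w where w: "inR q w" "- of_nat q = 2 * w" unfolding dvR_def by auto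
  hence "w = of_int (- int q) / of_int 2" by (simp add: field_simps)
  hence "inR q (of_int (- int q) / of_int 2)" using w(1) by simp
  hence "2 dvd (- int q)" by (rule inR_frac[OF q0, rotated]) simp
  thus False using q(2) by simp
qed



lemma core: assumes q: "prime q" "odd q" and N0: "odd (N 0)"
  and Nt: "\<forall>t. 0 < t \<longrightarrow> t < q \<longrightarrow> even (N t)"
  and nrm0: "ev q 1 N = 0 \<or> ev q 1 N * cnj (ev q 1 N) = of_nat q ^ m"
  shows "ev q 1 N \<noteq> 0 \<and> (\<exists>d::int. d^2 = 1 \<and> (ev q 1 N)^2 = of_int (d * int q ^ m) \<and> (d * int q ^ m) mod 4 = 1)"
proof -
  have q1: "q > 1" using q prime_gt_1_nat by blast
  hence q0: "q > 0" by simp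
  define \<beta> where "\<beta> = ev q 1 N"
  define w where "w = ev q 1 (\<lambda>t. (N t - (if t = 0 then 1 else 0)) div 2)"
  have ev2: "\<forall>t<q. 2 * ((N t - (if t = 0 then 1 else 0)) div 2) = N t - (if t = 0 then 1 else 0)"
    using N0 Nt by auto
  have "\<beta> - 1 = ev q 1 (\<lambda>t. N t - (if t = 0 then 1 else 0))"
    unfolding \<beta>_def ev_diff using ev_delta[OF q0, of 1 1] by simp
  also have "\<dots> = ev q 1 (\<lambda>t. 2 * ((N t - (if t = 0 then 1 else 0)) div 2))"
    unfolding ev_def using ev2 by (intro sum.cong refl) simp
  also have "\<dots> = 2 * w" unfolding w_def ev_smult by simp
  finally have bw: "\<beta> = 1 + 2 * w" by (simp add: algebra_simps)
  have inw: "inR q w" unfolding w_def by (rule inR_ev)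
  have bnz: "\<beta> \<noteq> 0"
  proof
    assume "\<beta> = 0"
    hence "2 * w = - 1" using bw by (simp add: algebra_simps eq_neg_iff_add_eq_0)
    hence "w = of_int (- 1) / of_int 2" by (simp add: field_simps)
    hence "inR q (of_int (- 1) / of_int 2)" using inw by simp
    hence "2 dvd (- 1 :: int)" by (rule inR_frac[OF q0, rotated]) simp
    thus False by simp
  qed
  have nrm: "ev q 1 N * cnj (ev q 1 N) = of_nat q ^ m" using nrm0 bnz \<beta>_def by blast
  define z where "z = \<beta>^2"
  have inb: "inR q \<beta>" unfolding \<beta>_def by (rule inR_ev)
  have inz: "inR q z" unfolding z_def by (rule inR_pow[OF q0 inb])
  have zz: "z * cnj z = of_nat q ^ (2 * m)"
    using nrm unfolding z_def \<beta>_def by (simp add: power_mult power2_eq_square mult_ac)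
  define k where "k = m * (q - 1)"
  have "dvR q ((piq q ^ (q - 1)) ^ (2 * m)) (of_nat q ^ (2 * m))"
    by (rule dvR_pow[OF q0 q_dvd_piq_pow[OF q]])
  moreover have "(piq q ^ (q - 1)) ^ (2 * m) = piq q ^ (2 * k)"
    unfolding k_def by (simp add: power_mult[symmetric] mult_ac)
  ultimately have "dvR q (piq q ^ (2 * k)) (z * cnj z)" using zz by simp
  hence "dvR q (piq q ^ k) z" by (rule val_lemma[OF q inz])
  moreover have "piq q ^ k = (piq q ^ (q - 1)) ^ m" by (simp only: k_def mult.commute[of m "q - 1"] power_mult)
  moreover have "dvR q (of_nat q ^ m) ((piq q ^ (q - 1)) ^ m)"
    by (rule dvR_pow[OF q0 piq_pow_dvd_q[OF q]])
  ultimately have "dvR q (of_nat q ^ m) z" using dvR_trans[OF q0] by metis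
  then obtain \<delta> where dl: "inR q \<delta>" "z = of_nat q ^ m * \<delta>" unfolding dvR_def by blast
  have qm0: "(of_nat q ^ m :: complex) \<noteq> 0" using q1 by simp
  have "of_nat q ^ m * of_nat q ^ m * (\<delta> * cnj \<delta>) = of_nat q ^ m * of_nat q ^ m * 1"
    using zz dl(2) by (simp add: power_mult mult_2 power_add mult_ac power2_eq_square)
  hence "\<delta> * cnj \<delta> = 1" using qm0 q1 by simp
  then obtain c d where cd: "c < q" "d^2 = (1::int)" "\<delta> = of_int d * zeta q ^ c"
    using kronecker[OF q dl(1)] by blast
  have z1: "z - 1 = 2 * (2 * (w + w^2))" using bw unfolding z_def by (simp add: power2_eq_square algebra_simps)
  have inw2: "inR q (w + w^2)" by (intro inR_add inw inR_pow[OF q0])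
  have "dvR q 2 (z - 1)" unfolding z1 by (intro dvR_multI inR_mult[OF q0] inR_int[OF q0, of 2, simplified] inw2)
  moreover have "z = of_int (int q ^ m) * of_int d * zeta q ^ c" using dl(2) cd(3) by simp
  ultimately have "dvR q 2 (of_int (int q ^ m) * of_int d * zeta q ^ c - 1)" by simp
  moreover have "odd (int q ^ m)" using q(2) by simp
  ultimately have "c = 0" using c_zero[OF q _ cd(2) cd(1)] by blast
  hence zd: "z = of_int (d * int q ^ m)" using dl(2) cd(3) by simp
  have eqw: "w + w^2 = of_int (d * int q ^ m - 1) / of_int 4" using z1 zd by (simp add: field_simps)
  have "inR q (of_int (d * int q ^ m - 1) / of_int 4)" using inw2 unfolding eqw .
  hence "4 dvd (d * int q ^ m - 1)" by (rule inR_frac[OF q0, rotated]) simp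
  hence "(d * int q ^ m) mod 4 = 1" by presburger
  show ?thesis using bnz zd cd(2) \<open>(d * int q ^ m) mod 4 = 1\<close> unfolding \<beta>_def z_def by blast
qed



lemma even_card_inv: "finite A \<Longrightarrow> (\<forall>x\<in>A. g x \<in> A \<and> g (g x) = x \<and> g x \<noteq> x) \<Longrightarrow> even (card A)"
proof (induction "card A" arbitrary: A rule: less_induct)
  case less
  show ?case
  proof (cases "A = {}")
    case False
    then obtain x where x: "x \<in> A" by blast
    define A' where "A' = A - {x, g x}"
    have gx: "g x \<in> A" "g x \<noteq> x" using less.prems x by auto
    have sub: "{x, g x} \<subseteq> A" using x gx by simp
    have c2: "card {x, g x} = 2" using gx by simp
    have "card {x, g x} \<le> card A" by (rule card_mono[OF less.prems(1) sub])
    moreover have "card A' = card A - card {x, g x}" unfolding A'_def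
      by (rule card_Diff_subset[OF _ sub]) simp
    ultimately have cA: "card A = card A' + 2" using c2 by simp
    have ggx: "g (g x) = x" using less.prems(2) x by blast
    have inv': "\<forall>y\<in>A'. g y \<in> A' \<and> g (g y) = y \<and> g y \<noteq> y"
    proof
      fix y assume y: "y \<in> A'"
      hence yA: "y \<in> A" "y \<noteq> x" "y \<noteq> g x" by (auto simp: A'_def)
      have h: "g y \<in> A" "g (g y) = y" "g y \<noteq> y" using less.prems(2) yA(1) by auto
      have n1: "g y \<noteq> x"
      proof
        assume "g y = x" hence "g (g y) = g x" by simp
        thus False using h(2) yA(3) by simp
      qed
      have n2: "g y \<noteq> g x"
      proof
        assume "g y = g x" hence "g (g y) = g (g x)" by simp
        thus False using h(2) ggx yA(2) by simp
      qed
      show "g y \<in> A' \<and> g (g y) = y \<and> g y \<noteq> y" using h n1 n2 by (simp add: A'_def)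
    qed
    have "even (card A')" using less.hyps[of A'] cA inv' less.prems(1) A'_def by simp
    thus ?thesis using cA by simp
  qed simp
qed

lemma Vsp_finite: "finite (Vsp p n)"
proof -
  have "Vsp p n \<subseteq> {x. \<forall>i. (i \<in> {..<n} \<longrightarrow> x i \<in> {0..<p}) \<and> (i \<notin> {..<n} \<longrightarrow> x i = 0)}"
    unfolding Vsp_def by auto
  thus ?thesis using finite_set_of_finite_funs[of "{..<n}" "{0..<p}" 0] finite_subset by blast
qed

lemma xi_zeta: assumes "q > 0" "c \<ge> 0" shows "xi (int q) c = zeta q ^ nat c"
proof -
  have "zeta q ^ nat c = cis (real (nat c) * (2 * pi / real q))" unfolding zeta_def DeMoivre ..
  also have "real (nat c) = real_of_int c" using assms by simp
  finally show ?thesis unfolding xi_def by (simp add: field_simps)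
qed

theorem lemma7:
  fixes p :: int and n s :: nat and M :: "nat \<Rightarrow> nat \<Rightarrow> int"
    and f :: "(nat \<Rightarrow> int) \<Rightarrow> int"
  assumes "prime p" and "odd p"
    and "symmetric_nondeg_form p n M"
    and "\<forall>x\<in>Vsp p n. 0 \<le> f x \<and> f x < p"
    and "plateaued p n M s f"
    and "f vzero = 0"
    and "\<forall>x\<in>Vsp p n. f x = f (vneg p x)"
  shows "vzero \<in> walsh_supp p n M s f \<and> dual p n M s f vzero = 0"
proof -
  note pr = assms(1) and po = assms(2) and frange = assms(4) and plat = assms(5)
    and f0 = assms(6) and fev = assms(7)
  define q where "q = nat p"
  have p0: "p > 0" using pr prime_gt_0_int by blast
  have pq: "p = int q" using p0 q_def by simp
  have qpr: "prime q" using pr q_def by simp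
  have qodd: "odd q" using po pq by simp
  have q1: "q > 1" using qpr prime_gt_1_nat by blast
  hence q0: "q > 0" by simp
  define V where "V = Vsp p n"
  have finV: "finite V" unfolding V_def by (rule Vsp_finite)
  have v0V: "vzero \<in> V" unfolding V_def Vsp_def vzero_def using p0 by auto
  define m where "m = n + s"
  define \<beta> where "\<beta> = walsh p n M f vzero"
  define N where "N t = int (card {x\<in>V. nat (f x) = t})" for t
  have bf0: "bform p n M vzero x = 0" for x by (simp add: bform_def vzero_def)
  have "\<beta> = (\<Sum>x\<in>V. zeta q ^ nat (f x))"
    unfolding \<beta>_def walsh_def V_def[symmetric] bf0
  proof (rule sum.cong[OF refl])
    fix x assume "x \<in> V"
    hence "f x \<ge> 0" using frange V_def by blast
    thus "xi p (f x - 0) = zeta q ^ nat (f x)" using xi_zeta[OF q0] pq by simp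
  qed
  also have "\<dots> = (\<Sum>t<q. \<Sum>x\<in>{x\<in>V. nat (f x) = t}. zeta q ^ nat (f x))"
  proof (rule sum.group[symmetric, OF finV])
    show "(\<lambda>x. nat (f x)) ` V \<subseteq> {..<q}" using frange V_def pq by force
  qed simp
  also have "\<dots> = (\<Sum>t<q. of_int (N t) * zeta q ^ t)"
    by (intro sum.cong refl) (simp add: N_def)
  finally have bev: "\<beta> = ev q 1 N" unfolding ev_def by simp
  have vnegV: "vneg p x \<in> V" if "x \<in> V" for x
    using that p0 unfolding V_def Vsp_def vneg_def by auto
  have vnegvneg: "vneg p (vneg p x) = x" if "x \<in> V" for x
  proof
    fix i
    have "0 \<le> x i \<and> x i < p" using that p0 unfolding V_def Vsp_def by (cases "i < n") auto
    hence "(- ((- x i) mod p)) mod p = x i"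
      by (metis add.inverse_inverse mod_minus_eq mod_pos_pos_trivial)
    thus "vneg p (vneg p x) i = x i" by (simp add: vneg_def)
  qed
  have vnegfix: "vneg p x \<noteq> x" if "x \<in> V" "x \<noteq> vzero" for x
  proof
    assume e: "vneg p x = x"
    have "x = vzero"
    proof
      fix i
      have xi: "0 \<le> x i \<and> x i < p" using that p0 unfolding V_def Vsp_def by (cases "i < n") auto
      have "(- x i) mod p = x i" using e unfolding vneg_def by metis
      hence "p dvd (- x i - x i)" by (metis mod_eq_dvd_iff mod_pos_pos_trivial xi)
      hence "p dvd 2 * x i" by (metis dvd_minus_iff minus_diff_eq mult_2 diff_minus_eq_add add.inverse_inverse)
      hence "p dvd 2 \<or> p dvd x i" using pr by (simp add: prime_dvd_mult_iff)
      moreover have "\<not> p dvd 2"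
      proof
        assume "p dvd 2" hence "p \<le> 2" by (simp add: zdvd_imp_le)
        moreover have "p \<ge> 2" using pr prime_ge_2_int by blast
        ultimately have "p = 2" by simp
        thus False using po by simp
      qed
      ultimately have "p dvd x i" by blast
      show "x i = vzero i"
      proof (rule ccontr)
        assume "x i \<noteq> vzero i" hence "0 < x i" using xi by (simp add: vzero_def)
        thus False using zdvd_not_zless xi \<open>p dvd x i\<close> by blast
      qed
    qed
    thus False using that(2) by blast
  qed
  have fev': "f (vneg p x) = f x" if "x \<in> V" for x using fev that V_def by simp
  have N0: "odd (N 0)"
  proof -
    define A where "A = {x\<in>V. nat (f x) = 0} - {vzero}"
    have "even (card A)"
    proof (rule even_card_inv[of A "vneg p"])
      show "finite A" using finV A_def by simp
      show "\<forall>x\<in>A. vneg p x \<in> A \<and> vneg p (vneg p x) = x \<and> vneg p x \<noteq> x"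
      proof
        fix x assume x: "x \<in> A"
        hence xV: "x \<in> V" and xz: "x \<noteq> vzero" and fx: "nat (f x) = 0" using A_def by auto
        have "vneg p x \<noteq> vzero"
        proof
          assume "vneg p x = vzero"
          hence "vneg p (vneg p x) = vneg p vzero" by simp
          hence "x = vneg p vzero" using vnegvneg[OF xV] by simp
          moreover have "vneg p vzero = vzero" by (simp add: vneg_def vzero_def)
          ultimately show False using xz by simp
        qed
        thus "vneg p x \<in> A \<and> vneg p (vneg p x) = x \<and> vneg p x \<noteq> x"
          using vnegV[OF xV] fev'[OF xV] fx vnegvneg[OF xV] vnegfix[OF xV xz] A_def by auto
      qed
    qed
    moreover have e: "{x\<in>V. nat (f x) = 0} = insert vzero A" using v0V f0 A_def by auto
    have "vzero \<notin> A" using A_def by simp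
    moreover have "finite A" using finV A_def by simp
    ultimately have "card (insert vzero A) = Suc (card A)" by simp
    hence "card {x\<in>V. nat (f x) = 0} = Suc (card A)" unfolding e .
    thus ?thesis using \<open>even (card A)\<close> by (simp add: N_def)
  qed
  have Nt: "\<forall>t. 0 < t \<longrightarrow> t < q \<longrightarrow> even (N t)"
  proof (intro allI impI)
    fix t :: nat assume t: "0 < t" "t < q"
    define A where "A = {x\<in>V. nat (f x) = t}"
    have "even (card A)"
    proof (rule even_card_inv[of A "vneg p"])
      show "finite A" using finV A_def by simp
      show "\<forall>x\<in>A. vneg p x \<in> A \<and> vneg p (vneg p x) = x \<and> vneg p x \<noteq> x"
      proof
        fix x assume x: "x \<in> A"
        hence xV: "x \<in> V" and fx: "nat (f x) = t" using A_def by auto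
        have xz: "x \<noteq> vzero" using fx f0 t by auto
        show "vneg p x \<in> A \<and> vneg p (vneg p x) = x \<and> vneg p x \<noteq> x"
          using vnegV[OF xV] fev'[OF xV] fx vnegvneg[OF xV] vnegfix[OF xV xz] A_def by auto
      qed
    qed
    thus "even (N t)" using A_def by (simp add: N_def)
  qed
  define P where "P = plat_mag p n s"
  have Pdef: "P = sqrt (real q) ^ m" unfolding P_def plat_mag_def m_def pq by simp
  have "P^2 = (sqrt (real q) ^ 2) ^ m" by (simp only: Pdef power_mult[symmetric] mult.commute[of m 2])
  hence P2: "P^2 = real q ^ m" by simp
  have Ppos: "P > 0" unfolding Pdef using q1 by simp
  have cm: "cmod \<beta> = 0 \<or> cmod \<beta> = P"
    using plat v0V unfolding plateaued_def P_def \<beta>_def V_def by blast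
  have nrm0: "ev q 1 N = 0 \<or> ev q 1 N * cnj (ev q 1 N) = of_nat q ^ m"
  proof (cases "cmod \<beta> = 0")
    case True thus ?thesis using bev by simp
  next
    case False
    hence "cmod \<beta> = P" using cm by simp
    moreover have "\<beta> * cnj \<beta> = complex_of_real ((cmod \<beta>)^2)" by (rule complex_norm_square[symmetric])
    ultimately have "\<beta> * cnj \<beta> = complex_of_real (P^2)" by simp
    thus ?thesis using bev P2 by simp
  qed
  obtain d where core: "\<beta> \<noteq> 0" "d^2 = 1" "\<beta>^2 = of_int (d * int q ^ m)" "(d * int q ^ m) mod 4 = 1"
    using core[OF qpr qodd N0 Nt nrm0] bev by blast
  have cmb: "cmod \<beta> = P" using cm core(1) by simp
  have supp: "vzero \<in> walsh_supp p n M s f"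
    unfolding walsh_supp_def using v0V cmb V_def \<beta>_def P_def by simp
  define \<mu> where "\<mu> = mu p n s"
  have mu2: "\<mu>^2 = of_int d"
  proof -
    have d1: "d = 1 \<or> d = -1" using core(2) by (metis power2_eq_1_iff)
    define Q where "Q = int q ^ m"
    have Qm: "p ^ (n + s) = Q" by (simp add: Q_def pq m_def)
    have dQ: "(d * Q) mod 4 = 1" using core(4) Q_def by simp
    show ?thesis
    proof (cases "p ^ (n + s) mod 4 = 1")
      case True
      hence Q1: "Q mod 4 = 1" using Qm by simp
      have "d = 1"
      proof (rule ccontr)
        assume "d \<noteq> 1" hence "d = -1" using d1 by simp
        hence "(- Q) mod 4 = 1" using dQ by simp
        thus False using Q1 by presburger
      qed
      thus ?thesis using True unfolding \<mu>_def mu_def by simp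
    next
      case False
      hence Q1: "Q mod 4 \<noteq> 1" using Qm by simp
      have "d = -1"
      proof (rule ccontr)
        assume "d \<noteq> -1" hence "d = 1" using d1 by simp
        thus False using dQ Q1 by simp
      qed
      thus ?thesis using False unfolding \<mu>_def mu_def by simp
    qed
  qed
  have cP2: "(of_real P :: complex)^2 = of_nat q ^ m"
  proof -
    have "(of_real P :: complex)^2 = of_real (P^2)" by simp
    also have "\<dots> = of_real (real q ^ m)" using P2 by simp
    also have "\<dots> = of_nat q ^ m" by simp
    finally show ?thesis .
  qed
  have "\<beta>^2 = (\<mu> * of_real P)^2"
    unfolding power_mult_distrib mu2 cP2 core(3) by simp
  hence disj: "\<beta> = \<mu> * of_real P \<or> \<beta> = - (\<mu> * of_real P)" by (simp add: power2_eq_iff)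
  have "\<exists>\<epsilon>::int. (\<epsilon> = 1 \<or> \<epsilon> = -1) \<and> \<beta> = of_int \<epsilon> * \<mu> * of_real P"
  proof (cases "\<beta> = \<mu> * of_real P")
    case True thus ?thesis by (intro exI[of _ 1]) simp
  next
    case False hence "\<beta> = - (\<mu> * of_real P)" using disj by blast
    thus ?thesis by (intro exI[of _ "-1"]) simp
  qed
  then obtain \<epsilon> :: int where eps: "\<epsilon> = 1 \<or> \<epsilon> = -1" "\<beta> = of_int \<epsilon> * \<mu> * of_real P"
    by blast
  have muP: "\<mu> * of_real P \<noteq> 0" using Ppos unfolding \<mu>_def mu_def by auto
  have "dual p n M s f vzero = 0"
    unfolding dual_def
  proof (rule the_equality)
    show "0 \<le> (0::int) \<and> 0 < p \<and> (\<exists>\<epsilon>::int. (\<epsilon> = 1 \<or> \<epsilon> = -1) \<and>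
        walsh p n M f vzero = of_int \<epsilon> * mu p n s * of_real (plat_mag p n s) * xi p 0)"
      using p0 eps \<beta>_def \<mu>_def P_def by (auto simp: xi_def)
  next
    fix c assume "0 \<le> c \<and> c < p \<and> (\<exists>\<epsilon>::int. (\<epsilon> = 1 \<or> \<epsilon> = -1) \<and>
        walsh p n M f vzero = of_int \<epsilon> * mu p n s * of_real (plat_mag p n s) * xi p c)"
    then obtain \<epsilon>' :: int where c: "0 \<le> c" "c < p" "\<epsilon>' = 1 \<or> \<epsilon>' = -1"
      "\<beta> = of_int \<epsilon>' * (\<mu> * of_real P) * xi p c"
      unfolding \<beta>_def \<mu>_def P_def by (auto simp: mult.assoc)
    have "of_int \<epsilon> * (\<mu> * of_real P) = \<beta>" using eps(2) by (simp add: mult.assoc)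
    also have "\<beta> = of_int \<epsilon>' * (\<mu> * of_real P) * xi p c" by (rule c(4))
    finally have "of_int \<epsilon> * (\<mu> * of_real P) = of_int \<epsilon>' * (\<mu> * of_real P) * xi p c" .
    hence "of_int \<epsilon> = of_int \<epsilon>' * xi p c" using muP by (simp add: mult_ac)
    hence sq: "(of_int \<epsilon> :: complex)^2 = (of_int \<epsilon>')^2 * (xi p c)^2" by (simp add: power_mult_distrib)
    have e1: "(of_int \<epsilon> :: complex)^2 = 1" using eps(1) by auto
    have e2: "(of_int \<epsilon>' :: complex)^2 = 1" using c(3) by auto
    have "(xi p c)^2 = 1" using sq unfolding e1 e2 by simp
    hence "zeta q ^ (2 * nat c) = 1" using xi_zeta[OF q0 c(1)] pq by (simp add: power_mult mult.commute)
    hence "q dvd 2 * nat c" using zeta_pow_eq_1[OF q0] by blast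
    hence "q dvd 2 \<or> q dvd nat c" using qpr by (simp add: prime_dvd_mult_iff)
    moreover have "\<not> q dvd 2"
    proof
      assume "q dvd 2" hence "q \<le> 2" by (simp add: dvd_imp_le)
      hence "q = 2" using q1 by simp
      thus False using qodd by simp
    qed
    ultimately have "q dvd nat c" by blast
    moreover have "nat c < q" using c pq by simp
    ultimately have "nat c = 0"
    proof -
      assume a1: "q dvd nat c" and a2: "nat c < q"
      show "nat c = 0"
      proof (rule ccontr)
        assume "nat c \<noteq> 0" hence "q \<le> nat c" using dvd_imp_le a1 by simp
        thus False using a2 by simp
      qed
    qed
    thus "c = 0" using c(1) by simp
  qed
  thus ?thesis using supp by blast
qed

end
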